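(* Let $\rho_{AB}$ be positive semidefinite on $\mathcal{H}_A\otimes\mathcal{H}_B$ with $0<\operatorname{tr}\rho_{AB}\le1$, and let $\tau_B$ be positive semidefinite on $\mathcal{H}_B$ with $0<\operatorname{tr}\tau_B\le1$ and $\operatorname{supp}\tau_B\supseteq\operatorname{supp}\rho_B$. Then, with $d_A=\dim\mathcal{H}_A$, $$d_u(A|B)_\rho\le\frac12\sqrt{d_A\,\Gamma_C(\rho_{AB}|\tau_B)-\operatorname{tr}\big(\rho_B\tau_B^{-1/2}\rho_B\tau_B^{-1/2}\big)}.$$
   Context: Hilbert spaces are finite-dimensional; inverses are generalized inverses (on the support); $\rho_B=\operatorname{tr}_A\rho_{AB}$. $\Gamma_C(\rho_{AB}|\tau_B):=\operatorname{tr}\big((\rho_{AB}(\mathbb{1}_A\otimes\tau_B^{-1/2}))^2\big)$. Distance from uniform: $d_u(A|B)_\rho=\min_{\sigma_B}\frac12\|\rho_{AB}-\omega_A\otimes\sigma_B\|_1$ where $\omega_A=\mathbb{1}_A/d_A$ and the minimum is over positive semidefinite $\sigma_B$ with $\operatorname{tr}\sigma_B=\operatorname{tr}\rho_B$. *)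

theory Defs
  imports "Jordan_Normal_Form.Schur_Decomposition"
begin

(* Finite-dimensional quantum objects as complex matrices.
   H_A = C^dA, H_B = C^dB, H_A (x) H_B = C^(dA*dB) with basis index a*dB + b. *)

definition mtrace :: "complex mat \<Rightarrow> complex" where
  "mtrace A = (\<Sum>i<dim_row A. A $$ (i,i))"

definition hermitian :: "complex mat \<Rightarrow> bool" where
  "hermitian A \<longleftrightarrow> mat_adjoint A = A"

definition psd :: "nat \<Rightarrow> complex mat \<Rightarrow> bool" where
  "psd n A \<longleftrightarrow> A \<in> carrier_mat n n \<and> hermitian A \<and>
     (\<forall>v \<in> carrier_vec n. 0 \<le> Re ((A *\<^sub>v v) \<bullet>c v))"

definition unitary :: "nat \<Rightarrow> complex mat \<Rightarrow> bool" where
  "unitary n U \<longleftrightarrow> U \<in> carrier_mat n n \<and> mat_adjoint U * U = 1\<^sub>m n"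

definition mat_fun :: "nat \<Rightarrow> (real \<Rightarrow> real) \<Rightarrow> complex mat \<Rightarrow> complex mat" where
  "mat_fun n f A =
     (let (U, d) = (SOME (U, d). unitary n U \<and>
                      A = U * mat_diag n (\<lambda>i. complex_of_real (d i)) * mat_adjoint U)
      in U * mat_diag n (\<lambda>i. complex_of_real (f (d i))) * mat_adjoint U)"

definition pinv_sqrt :: "nat \<Rightarrow> complex mat \<Rightarrow> complex mat" where
  "pinv_sqrt n A = mat_fun n (\<lambda>x. if x > 0 then 1 / sqrt x else 0) A"

definition trace_norm :: "nat \<Rightarrow> complex mat \<Rightarrow> real" where
  "trace_norm n X = Re (mtrace (mat_fun n sqrt (mat_adjoint X * X)))"

definition kron :: "complex mat \<Rightarrow> complex mat \<Rightarrow> complex mat" where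
  "kron A B = mat (dim_row A * dim_row B) (dim_col A * dim_col B)
     (\<lambda>(i,j). A $$ (i div dim_row B, j div dim_col B) * B $$ (i mod dim_row B, j mod dim_col B))"

definition ptrace_A :: "nat \<Rightarrow> nat \<Rightarrow> complex mat \<Rightarrow> complex mat" where
  "ptrace_A dA dB R = mat dB dB (\<lambda>(i,j). \<Sum>a<dA. R $$ (a*dB + i, a*dB + j))"

definition supp :: "nat \<Rightarrow> complex mat \<Rightarrow> complex vec set" where
  "supp n M = {M *\<^sub>v v | v. v \<in> carrier_vec n}"

definition Gamma_C :: "nat \<Rightarrow> nat \<Rightarrow> complex mat \<Rightarrow> complex mat \<Rightarrow> complex" where
  "Gamma_C dA dB R T =
     (let X = R * kron (1\<^sub>m dA) (pinv_sqrt dB T) in mtrace (X * X))"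

definition d_u :: "nat \<Rightarrow> nat \<Rightarrow> complex mat \<Rightarrow> real" where
  "d_u dA dB R = Inf {trace_norm (dA*dB) (R - kron ((1 / of_nat dA) \<cdot>\<^sub>m 1\<^sub>m dA) S) / 2 | S.
                       psd dB S \<and> mtrace S = mtrace (ptrace_A dA dB R)}"

end

theory Submission
  imports Defs "Jordan_Normal_Form.Spectral_Radius"
begin


lemma adj_dim[simp]: "dim_row (mat_adjoint A) = dim_col A" "dim_col (mat_adjoint A) = dim_row A"
  by (simp_all add: mat_adjoint_def)

lemma adj_index[simp]: "i < dim_col A \<Longrightarrow> j < dim_row A \<Longrightarrow> mat_adjoint A $$ (i,j) = cnj (A $$ (j,i))"
  unfolding mat_adjoint_def by (subst mat_of_rows_index) auto

lemma adj_carrier[simp]: "A \<in> carrier_mat n m \<Longrightarrow> mat_adjoint A \<in> carrier_mat m n"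
  apply (rule carrier_matI)
  apply (simp_all only: adj_dim)
  apply (metis carrier_matD)+
  done

lemma adj_adj[simp]: "mat_adjoint (mat_adjoint A) = (A :: complex mat)"
  by (rule eq_matI) auto

lemma mult_idx: "A \<in> carrier_mat n k \<Longrightarrow> B \<in> carrier_mat k m \<Longrightarrow> i < n \<Longrightarrow> j < m \<Longrightarrow>
   (A * B) $$ (i,j) = (\<Sum>l<k. A $$ (i,l) * B $$ (l,j))"
  by (auto simp: scalar_prod_def lessThan_atLeast0 intro!: sum.cong)

lemma adj_mult: "A \<in> carrier_mat n k \<Longrightarrow> B \<in> carrier_mat k m \<Longrightarrow>
  mat_adjoint (A * B) = mat_adjoint B * mat_adjoint (A :: complex mat)"
proof (rule eq_matI)
  fix i j assume A: "A \<in> carrier_mat n k" and B: "B \<in> carrier_mat k m"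
    and i: "i < dim_row (mat_adjoint B * mat_adjoint A)" and j: "j < dim_col (mat_adjoint B * mat_adjoint A)"
  hence i': "i < m" and j': "j < n" by auto
  have "mat_adjoint (A * B) $$ (i, j) = cnj ((A*B) $$ (j,i))" using A B i' j' by simp
  also have "\<dots> = (\<Sum>l<k. cnj (A $$ (j,l)) * cnj (B $$ (l,i)))"
    by (subst mult_idx[OF A B j' i']) (simp add: cnj_sum)
  also have "\<dots> = (mat_adjoint B * mat_adjoint A) $$ (i,j)"
    by (subst mult_idx[of _ m k _ n]) (use A B i' j' in \<open>auto simp: mult.commute intro!: sum.cong\<close>)
  finally show "mat_adjoint (A * B) $$ (i, j) = (mat_adjoint B * mat_adjoint A) $$ (i,j)" .
qed (auto)

lemma adj_one[simp]: "mat_adjoint (1\<^sub>m n :: complex mat) = 1\<^sub>m n"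
  by (rule eq_matI) auto

lemma adj_diag[simp]: "mat_adjoint (mat_diag n (\<lambda>i. complex_of_real (d i))) = mat_diag n (\<lambda>i. complex_of_real (d i))"
  by (rule eq_matI) (auto simp: mat_diag_def)

lemma adj_add: "A \<in> carrier_mat n m \<Longrightarrow> B \<in> carrier_mat n m \<Longrightarrow>
  mat_adjoint (A + B) = mat_adjoint A + mat_adjoint (B :: complex mat)"
  by (rule eq_matI) auto

lemma adj_minus: "A \<in> carrier_mat n m \<Longrightarrow> B \<in> carrier_mat n m \<Longrightarrow>
  mat_adjoint (A - B) = mat_adjoint A - mat_adjoint (B :: complex mat)"
  by (rule eq_matI) auto

lemma adj_smult: "mat_adjoint (c \<cdot>\<^sub>m A) = cnj c \<cdot>\<^sub>m mat_adjoint (A :: complex mat)"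
  by (rule eq_matI) auto

lemma mtrace_alt: "mtrace A = (\<Sum>i<dim_row A. A $$ (i,i))" by (simp add: mtrace_def)

lemma mtrace_comm: "A \<in> carrier_mat n m \<Longrightarrow> B \<in> carrier_mat m n \<Longrightarrow>
  mtrace (A * B) = mtrace (B * A)"
proof -
  assume A: "A \<in> carrier_mat n m" and B: "B \<in> carrier_mat m n"
  have "mtrace (A * B) = (\<Sum>i<n. \<Sum>l<m. A $$ (i,l) * B $$ (l,i))"
    unfolding mtrace_def using A B by (auto simp: mult_idx[OF A B] simp del: index_mult_mat(1) intro!: sum.cong)
  also have "\<dots> = (\<Sum>l<m. \<Sum>i<n. B $$ (l,i) * A $$ (i,l))"
    by (subst sum.swap) (simp add: mult.commute)
  also have "\<dots> = mtrace (B * A)"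
    unfolding mtrace_def using A B by (auto simp: mult_idx[OF B A] simp del: index_mult_mat(1) intro!: sum.cong)
  finally show ?thesis .
qed

lemma mtrace_add: "A \<in> carrier_mat n n \<Longrightarrow> B \<in> carrier_mat n n \<Longrightarrow>
  mtrace (A + B) = mtrace A + mtrace B"
  unfolding mtrace_def by (auto simp: sum.distrib)

lemma mtrace_minus: "A \<in> carrier_mat n n \<Longrightarrow> B \<in> carrier_mat n n \<Longrightarrow>
  mtrace (A - B) = mtrace A - mtrace B"
  unfolding mtrace_def by (auto simp: sum_subtractf)

lemma mtrace_smult: "A \<in> carrier_mat n n \<Longrightarrow> mtrace (c \<cdot>\<^sub>m A) = c * mtrace A"
  unfolding mtrace_def by (auto simp: sum_distrib_left)

lemma mtrace_diag: "mtrace (mat_diag n f) = (\<Sum>i<n. f i)"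
  unfolding mtrace_def by (simp add: mat_diag_def)

definition unit' :: "nat \<Rightarrow> complex mat \<Rightarrow> bool" where
  "unit' n U \<longleftrightarrow> U \<in> carrier_mat n n \<and> mat_adjoint U * U = 1\<^sub>m n \<and> U * mat_adjoint U = 1\<^sub>m n"

lemma unitary_unit': "unitary n U \<Longrightarrow> unit' n U"
  unfolding unitary_def unit'_def
  using mat_mult_left_right_inverse[of "mat_adjoint U" n U] by auto

lemma unit'_unitary: "unit' n U \<Longrightarrow> unitary n U"
  unfolding unitary_def unit'_def by auto

lemma unit'_mult: "unit' n U \<Longrightarrow> unit' n V \<Longrightarrow> unit' n (U * V)"
proof -
  assume u: "unit' n U" and v: "unit' n V"
  hence U: "U \<in> carrier_mat n n" and V: "V \<in> carrier_mat n n" by (auto simp: unit'_def)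
  have UA: "mat_adjoint U \<in> carrier_mat n n" and VA: "mat_adjoint V \<in> carrier_mat n n" using U V by auto
  have "mat_adjoint (U*V) * (U*V) = mat_adjoint V * (mat_adjoint U * (U * V))"
    by (simp add: adj_mult[OF U V] assoc_mult_mat[OF VA UA mult_carrier_mat[OF U V]])
  also have "\<dots> = mat_adjoint V * ((mat_adjoint U * U) * V)"
    by (simp add: assoc_mult_mat[OF UA U V])
  also have "\<dots> = 1\<^sub>m n" using u v V unfolding unit'_def by simp
  finally have 1: "mat_adjoint (U*V) * (U*V) = 1\<^sub>m n" .
  have "(U*V) * mat_adjoint (U*V) = U * (V * (mat_adjoint V * mat_adjoint U))"
    by (simp add: adj_mult[OF U V] assoc_mult_mat[OF U V mult_carrier_mat[OF VA UA]])
  also have "\<dots> = U * ((V * mat_adjoint V) * mat_adjoint U)"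
    by (simp add: assoc_mult_mat[OF V VA UA])
  also have "\<dots> = 1\<^sub>m n" using u v U unfolding unit'_def by simp
  finally show ?thesis using 1 U V unfolding unit'_def by auto
qed

lemma unit'_adj: "unit' n U \<Longrightarrow> unit' n (mat_adjoint U)"
  unfolding unit'_def by auto



lemma cscalar_smult: fixes x y :: "complex vec"
  assumes "x \<in> carrier_vec n" "y \<in> carrier_vec n"
  shows "(a \<cdot>\<^sub>v x) \<bullet>c (b \<cdot>\<^sub>v y) = a * cnj b * (x \<bullet>c y)"
proof -
  have cy: "conjugate y \<in> carrier_vec n" using assms by simp
  have "conjugate (b \<cdot>\<^sub>v y) = cnj b \<cdot>\<^sub>v conjugate y" by (simp add: conjugate_smult_vec)
  thus ?thesis using assms cy by (simp add: smult_scalar_prod_distrib scalar_prod_smult_distrib)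
qed

lemma cscalar_self_real: fixes w :: "complex vec"
  assumes "w \<in> carrier_vec n" "w \<noteq> 0\<^sub>v n"
  shows "w \<bullet>c w = complex_of_real (Re (w \<bullet>c w))" "Re (w \<bullet>c w) > 0"
proof -
  have ge: "w \<bullet>c w \<ge> 0" by (rule conjugate_square_ge_0_vec)
  have ne: "w \<bullet>c w \<noteq> 0" using assms conjugate_square_eq_0_vec by blast
  from ge show "w \<bullet>c w = complex_of_real (Re (w \<bullet>c w))"
    by (auto simp: less_eq_complex_def complex_eq_iff)
  with ge ne show "Re (w \<bullet>c w) > 0"
    by (auto simp: less_eq_complex_def complex_eq_iff)
qed

lemma udu_idx: "U \<in> carrier_mat n n \<Longrightarrow> i < n \<Longrightarrow> j < n \<Longrightarrow>
  (U * mat_diag n f * mat_adjoint U) $$ (i,j) = (\<Sum>k<n. U $$ (i,k) * f k * cnj (U $$ (j,k)))"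
  by (subst mult_idx[of _ n n _ n]) (auto simp: mat_diag_mult_right[of _ n] intro!: sum.cong)

lemma uu_idx: "U \<in> carrier_mat n m \<Longrightarrow> V \<in> carrier_mat n k \<Longrightarrow> i < m \<Longrightarrow> j < k \<Longrightarrow>
  (mat_adjoint U * V) $$ (i,j) = (\<Sum>l<n. cnj (U $$ (l,i)) * V $$ (l,j))"
  by (subst mult_idx[of _ m n _ k]) (auto intro!: sum.cong)

lemma unit'_from_adj_mult: "U \<in> carrier_mat n n \<Longrightarrow> mat_adjoint U * U = 1\<^sub>m n \<Longrightarrow> unit' n U"
  by (rule unitary_unit') (simp add: unitary_def)

lemma spectral:
  fixes A :: "complex mat"
  assumes "A \<in> carrier_mat n n" "mat_adjoint A = A"
  shows "\<exists>U d. unit' n U \<and> A = U * mat_diag n (\<lambda>i. complex_of_real (d i)) * mat_adjoint U"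
  using assms
proof (induction n arbitrary: A)
  case 0
  show ?case
  proof (intro exI conjI)
    show "A = 1\<^sub>m 0 * mat_diag 0 (\<lambda>i. complex_of_real 0) * mat_adjoint (1\<^sub>m 0)"
      by (rule eq_matI) (use 0 in auto)
    show "unit' 0 (1\<^sub>m 0)" by (simp add: unit'_def)
  qed
next
  case (Suc m A)
  define n where "n = Suc m"
  have A: "A \<in> carrier_mat n n" and herm: "mat_adjoint A = A" using Suc n_def by auto
  from spectrum_non_empty[OF A] obtain e where "e \<in> spectrum A" unfolding n_def by auto
  hence "eigenvalue A e" by (simp add: spectrum_def)
  then obtain v where v: "v \<in> carrier_vec n" "v \<noteq> 0\<^sub>v n" and Av: "A *\<^sub>v v = e \<cdot>\<^sub>v v"
    unfolding eigenvalue_def eigenvector_def using A by auto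
  interpret cof_vec_space n "TYPE(complex)" .
  define b where "b = basis_completion v"
  from basis_completion[OF v(1) v(2), folded b_def]
  have b: "set b \<subseteq> carrier_vec n" "distinct b" "\<not> lin_dep (set b)" "length b = n" "hd b = v" by auto
  from b(4,5) obtain vs where bv: "b = v # vs" unfolding n_def by (cases b) auto
  define ws where "ws = gram_schmidt n b"
  from gram_schmidt_result[OF b(1) b(2) b(3) ws_def]
  have ws: "corthogonal ws" "set ws \<subseteq> carrier_vec n" "length ws = n" using b(4) by auto
  have hdws: "ws ! 0 = v" unfolding ws_def bv using gram_schmidt_hd[OF v(1), of vs]
    by (metis hd_conv_nth bv ws(3)[unfolded ws_def] n_def list.size(3) nat.distinct(1))
  define c where "c = (\<lambda>w :: complex vec. complex_of_real (1 / sqrt (Re (w \<bullet>c w))))"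
  define ws' where "ws' = map (\<lambda>w. c w \<cdot>\<^sub>v w) ws"
  have wsc: "\<And>i. i < n \<Longrightarrow> ws ! i \<in> carrier_vec n" using ws by auto
  have wsnz: "\<And>i. i < n \<Longrightarrow> ws ! i \<noteq> 0\<^sub>v n"
  proof
    fix i assume i: "i < n" and z: "ws ! i = 0\<^sub>v n"
    have "ws ! i \<bullet>c ws ! i \<noteq> 0" using corthogonalD[OF ws(1), of i i] i ws(3) by auto
    thus False using z by simp
  qed
  have ws'c: "\<And>i. i < n \<Longrightarrow> ws' ! i \<in> carrier_vec n" using wsc ws(3) by (simp add: ws'_def)
  have len': "length ws' = n" using ws(3) by (simp add: ws'_def)
  have orth': "\<And>i j. i < n \<Longrightarrow> j < n \<Longrightarrow> ws' ! j \<bullet>c ws' ! i = (if i = j then 1 else 0)"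
  proof -
    fix i j assume i: "i < n" and j: "j < n"
    have eq: "ws' ! j \<bullet>c ws' ! i = c (ws!j) * cnj (c (ws!i)) * (ws ! j \<bullet>c ws ! i)"
      using i j ws(3) wsc by (simp add: ws'_def cscalar_smult[of _ n])
    show "ws' ! j \<bullet>c ws' ! i = (if i = j then 1 else 0)"
    proof (cases "i = j")
      case True
      note r = cscalar_self_real[OF wsc[OF i] wsnz[OF i]]
      define r0 where "r0 = Re (ws ! i \<bullet>c ws ! i)"
      have r0: "r0 > 0" using r(2) by (simp add: r0_def)
      have s1: "ws ! i \<bullet>c ws ! i = complex_of_real r0" using r(1) by (simp add: r0_def)
      have s2: "c (ws ! i) = complex_of_real (1 / sqrt r0)" by (simp add: c_def r0_def)
      have "ws' ! j \<bullet>c ws' ! i = complex_of_real ((1 / sqrt r0) * (1 / sqrt r0) * r0)"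
        using eq True s1 s2 r0 by (simp flip: of_real_mult)
      also have "(1 / sqrt r0) * (1 / sqrt r0) * r0 = 1" using r0
        by (simp add: field_simps real_sqrt_mult[symmetric])
      finally show ?thesis using True by simp
    next
      case False
      hence "ws ! j \<bullet>c ws ! i = 0" using corthogonalD[OF ws(1), of j i] i j ws(3) by auto
      thus ?thesis using eq False by simp
    qed
  qed
  define W where "W = mat_of_cols n ws'"
  have W: "W \<in> carrier_mat n n" using mat_of_cols_carrier(1)[of n ws'] len' by (simp add: W_def)
  have Widx: "\<And>i j. i < n \<Longrightarrow> j < n \<Longrightarrow> W $$ (i,j) = ws' ! j $ i"
    using len' by (simp add: W_def mat_of_cols_index)
  have WW: "mat_adjoint W * W = 1\<^sub>m n"
  proof (rule eq_matI)
    fix i j assume i: "i < dim_row (1\<^sub>m n)" and j: "j < dim_col (1\<^sub>m n)"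
    hence i: "i < n" and j: "j < n" by auto
    have "(mat_adjoint W * W) $$ (i,j) = (\<Sum>l<n. cnj (W $$ (l,i)) * W $$ (l,j))"
      by (rule uu_idx[OF W W i j])
    also have "\<dots> = ws' ! j \<bullet>c ws' ! i"
      using ws'c[OF i] ws'c[OF j] i j
      by (auto simp: Widx scalar_prod_def lessThan_atLeast0 mult.commute intro!: sum.cong)
    finally show "(mat_adjoint W * W) $$ (i,j) = 1\<^sub>m n $$ (i,j)" using orth'[OF i j] i j by auto
  qed (use W in auto)
  have uW: "unit' n W" by (rule unit'_from_adj_mult[OF W WW])
  have WA: "mat_adjoint W \<in> carrier_mat n n" using W by simp
  define A' where "A' = mat_adjoint W * A * W"
  have A': "A' \<in> carrier_mat n n" using W A by (simp add: A'_def mult_carrier_mat[of _ n n _ n])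
  have n0: "0 < n" by (simp add: n_def)
  have w0: "ws' ! 0 = c v \<cdot>\<^sub>v v" using hdws ws(3) n0 by (simp add: ws'_def)
  have Aw0: "\<And>k. k < n \<Longrightarrow> (\<Sum>l<n. A $$ (k,l) * W $$ (l,0)) = e * W $$ (k,0)"
  proof -
    fix k assume k: "k < n"
    have "(A *\<^sub>v (ws' ! 0)) $ k = (e \<cdot>\<^sub>v ws' ! 0) $ k"
      using Av v(1) A k by (simp add: w0 mult_mat_vec[of A n n])
    thus "(\<Sum>l<n. A $$ (k,l) * W $$ (l,0)) = e * W $$ (k,0)"
      using k A ws'c[OF n0] n0
      by (auto simp: Widx scalar_prod_def lessThan_atLeast0 intro!: sum.cong)
  qed
  have col0: "\<And>i. i < n \<Longrightarrow> A' $$ (i,0) = (if i = 0 then e else 0)"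
  proof -
    fix i assume i: "i < n"
    have "A' $$ (i,0) = (mat_adjoint W * (A * W)) $$ (i,0)"
      unfolding A'_def using assoc_mult_mat[OF WA A W] by simp
    also have "\<dots> = (\<Sum>k<n. mat_adjoint W $$ (i,k) * (A * W) $$ (k,0))"
      by (rule mult_idx[OF WA mult_carrier_mat[OF A W] i n0])
    also have "\<dots> = (\<Sum>k<n. mat_adjoint W $$ (i,k) * (e * W $$ (k,0)))"
      by (rule sum.cong[OF refl]) (simp add: mult_idx[OF A W _ n0] Aw0 del: index_mult_mat(1))
    also have "\<dots> = e * (mat_adjoint W * W) $$ (i,0)"
      by (simp add: mult_idx[OF WA W i n0] sum_distrib_left mult.commute mult.left_commute del: index_mult_mat(1))
    also have "\<dots> = (if i = 0 then e else 0)" using WW i n0 by simp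
    finally show "A' $$ (i,0) = (if i = 0 then e else 0)" .
  qed
  have hA': "mat_adjoint A' = A'"
  proof -
    have "mat_adjoint A' = mat_adjoint W * mat_adjoint (mat_adjoint W * A)"
      unfolding A'_def by (rule adj_mult[OF mult_carrier_mat[OF WA A] W])
    also have "\<dots> = A'" unfolding A'_def by (simp add: adj_mult[OF WA A] herm assoc_mult_mat[OF WA A W])
    finally show ?thesis .
  qed
  have herm_idx: "\<And>i j. i < n \<Longrightarrow> j < n \<Longrightarrow> A' $$ (i,j) = cnj (A' $$ (j,i))"
  proof -
    fix i j assume "i < n" "j < n"
    hence "mat_adjoint A' $$ (i,j) = cnj (A' $$ (j,i))" using A' by simp
    thus "A' $$ (i,j) = cnj (A' $$ (j,i))" using hA' by simp
  qed
  have ereal: "e = complex_of_real (Re e)"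
  proof -
    have ec: "e = cnj e" using herm_idx[OF n0 n0] col0[OF n0] by simp
    have "Im e = - Im e" using arg_cong[OF ec, of Im] by simp
    hence "Im e = 0" by simp
    thus ?thesis by (simp add: complex_eq_iff)
  qed
  have row0: "\<And>j. j < n \<Longrightarrow> A' $$ (0,j) = (if j = 0 then e else 0)"
  proof -
    fix j assume j: "j < n"
    show "A' $$ (0,j) = (if j = 0 then e else 0)"
      using herm_idx[OF n0 j] col0[OF j] col0[OF n0] by (cases "j = 0") auto
  qed
  define A3 where "A3 = mat m m (\<lambda>(i,j). A' $$ (Suc i, Suc j))"
  have A3: "A3 \<in> carrier_mat m m" by (simp add: A3_def)
  have hA3: "mat_adjoint A3 = A3"
  proof (rule eq_matI)
    fix i j assume "i < dim_row A3" "j < dim_col A3"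
    hence i: "i < m" and j: "j < m" by (auto simp: A3_def)
    show "mat_adjoint A3 $$ (i,j) = A3 $$ (i,j)"
      using herm_idx[of "Suc j" "Suc i"] i j by (simp add: A3_def n_def)
  qed (auto simp: A3_def)
  from Suc.IH[OF A3 hA3] obtain U3 d3 where U3: "unit' m U3"
    and A3eq: "A3 = U3 * mat_diag m (\<lambda>i. complex_of_real (d3 i)) * mat_adjoint U3" by blast
  have U3c: "U3 \<in> carrier_mat m m" using U3 by (simp add: unit'_def)
  define U1 where "U1 = mat n n (\<lambda>(i,j). if i = 0 \<and> j = 0 then 1 else if i = 0 \<or> j = 0 then 0 else U3 $$ (i-1, j-1))"
  define d where "d = (\<lambda>i. if i = 0 then Re e else d3 (i - 1))"
  have U1: "U1 \<in> carrier_mat n n" by (simp add: U1_def)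
  have U1idx: "\<And>i j. i < n \<Longrightarrow> j < n \<Longrightarrow> U1 $$ (i,j) = (if i = 0 \<and> j = 0 then 1 else if i = 0 \<or> j = 0 then 0 else U3 $$ (i-1, j-1))"
    by (simp add: U1_def)
  have U3U3: "\<And>i j. i < m \<Longrightarrow> j < m \<Longrightarrow> (\<Sum>l<m. cnj (U3 $$ (l,i)) * U3 $$ (l,j)) = (if i = j then 1 else 0)"
  proof -
    fix i j assume i: "i < m" and j: "j < m"
    have "(mat_adjoint U3 * U3) $$ (i,j) = (\<Sum>l<m. cnj (U3 $$ (l,i)) * U3 $$ (l,j))"
      by (rule uu_idx[OF U3c U3c i j])
    thus "(\<Sum>l<m. cnj (U3 $$ (l,i)) * U3 $$ (l,j)) = (if i = j then 1 else 0)"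
      using U3 i j by (simp add: unit'_def)
  qed
  have U1U1: "mat_adjoint U1 * U1 = 1\<^sub>m n"
  proof (rule eq_matI)
    fix i j assume i: "i < dim_row (1\<^sub>m n)" and j: "j < dim_col (1\<^sub>m n)"
    hence i: "i < n" and j: "j < n" by auto
    have "(mat_adjoint U1 * U1) $$ (i,j) = (\<Sum>l<Suc m. cnj (U1 $$ (l,i)) * U1 $$ (l,j))"
      using uu_idx[OF U1 U1 i j] by (simp add: n_def)
    also have "\<dots> = cnj (U1 $$ (0,i)) * U1 $$ (0,j) + (\<Sum>l<m. cnj (U1 $$ (Suc l,i)) * U1 $$ (Suc l,j))"
      by (subst sum.lessThan_Suc_shift) simp
    also have "\<dots> = 1\<^sub>m n $$ (i,j)"
    proof (cases "i = 0")
      case True thus ?thesis using i j n0 by (simp add: U1idx n_def)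
    next
      case False note i0 = this
      show ?thesis
      proof (cases "j = 0")
        case True thus ?thesis using i j i0 by (simp add: U1idx n_def)
      next
        case False
        have "(\<Sum>l<m. cnj (U1 $$ (Suc l,i)) * U1 $$ (Suc l,j)) = (\<Sum>l<m. cnj (U3 $$ (l,i-1)) * U3 $$ (l,j-1))"
          using i j i0 False by (auto simp: U1idx n_def intro!: sum.cong)
        also have "\<dots> = (if i - 1 = j - 1 then 1 else 0)" using i j i0 False by (intro U3U3) (auto simp: n_def)
        finally show ?thesis using i j i0 False by (auto simp: U1idx n_def)
      qed
    qed
    finally show "(mat_adjoint U1 * U1) $$ (i,j) = 1\<^sub>m n $$ (i,j)" .
  qed (use U1 in auto)
  have uU1: "unit' n U1" by (rule unit'_from_adj_mult[OF U1 U1U1])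
  define D where "D = mat_diag n (\<lambda>i. complex_of_real (d i))"
  have Dc: "D \<in> carrier_mat n n" by (simp add: D_def)
  have A'eq: "A' = U1 * D * mat_adjoint U1"
  proof (rule eq_matI)
    fix i j assume i: "i < dim_row (U1 * D * mat_adjoint U1)" and j: "j < dim_col (U1 * D * mat_adjoint U1)"
    hence i: "i < n" and j: "j < n" using U1 by (auto simp: D_def)
    have "(U1 * D * mat_adjoint U1) $$ (i,j) = (\<Sum>k<Suc m. U1 $$ (i,k) * complex_of_real (d k) * cnj (U1 $$ (j,k)))"
      unfolding D_def using udu_idx[OF U1 i j] by (simp add: n_def)
    also have "\<dots> = U1 $$ (i,0) * complex_of_real (d 0) * cnj (U1 $$ (j,0)) +
        (\<Sum>k<m. U1 $$ (i,Suc k) * complex_of_real (d (Suc k)) * cnj (U1 $$ (j,Suc k)))"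
      by (subst sum.lessThan_Suc_shift) simp
    also have "\<dots> = A' $$ (i,j)"
    proof (cases "i = 0")
      case True thus ?thesis using i j n0 row0 ereal by (auto simp: U1idx d_def n_def)
    next
      case False note i0 = this
      show ?thesis
      proof (cases "j = 0")
        case True thus ?thesis using i j i0 col0 by (simp add: U1idx n_def)
      next
        case False
        have "(\<Sum>k<m. U1 $$ (i,Suc k) * complex_of_real (d (Suc k)) * cnj (U1 $$ (j,Suc k)))
            = (\<Sum>k<m. U3 $$ (i-1,k) * complex_of_real (d3 k) * cnj (U3 $$ (j-1,k)))"
          using i j i0 False by (auto simp: U1idx n_def d_def intro!: sum.cong)
        also have "\<dots> = A3 $$ (i-1, j-1)"
          unfolding A3eq using i j i0 False by (subst udu_idx[OF U3c]) (auto simp: n_def)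
        also have "\<dots> = A' $$ (i,j)" using i j i0 False by (simp add: A3_def n_def)
        finally show ?thesis using i0 False using i j by (simp add: U1idx)
      qed
    qed
    finally show "A' $$ (i,j) = (U1 * D * mat_adjoint U1) $$ (i,j)" by simp
  qed (use A' U1 in \<open>auto simp: D_def\<close>)
  define U where "U = W * U1"
  have uU: "unit' n U" unfolding U_def by (rule unit'_mult[OF uW uU1])
  have WWa: "W * mat_adjoint W = 1\<^sub>m n" using uW by (simp add: unit'_def)
  have U1A: "mat_adjoint U1 \<in> carrier_mat n n" using U1 by simp
  note as = assoc_mult_mat[of _ n n _ n _ n] and mc = mult_carrier_mat[of _ n n _ n]
  have "W * A' = (W * mat_adjoint W) * A * W" unfolding A'_def using W WA A by (simp add: as mc)
  also have "\<dots> = A * W" using WWa A by simp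
  finally have WA': "W * A' = A * W" .
  have "A = A * (W * mat_adjoint W)" using WWa A by simp
  also have "\<dots> = W * A' * mat_adjoint W" unfolding WA' using W WA A by (simp add: as mc)
  also have "\<dots> = W * (U1 * D * mat_adjoint U1) * mat_adjoint W" by (simp add: A'eq)
  also have "\<dots> = U * D * mat_adjoint U" unfolding U_def
    using W WA U1 U1A Dc by (simp add: adj_mult[OF W U1] as mc)
  finally show ?case using uU unfolding D_def n_def by blast
qed



abbreviation dg :: "nat \<Rightarrow> (nat \<Rightarrow> real) \<Rightarrow> complex mat" where
  "dg n d \<equiv> mat_diag n (\<lambda>i. complex_of_real (d i))"

lemma dg_dims[simp]: "dim_row (mat_diag n f) = n" "dim_col (mat_diag n f) = n"
  by (simp_all add: mat_diag_def)

lemma unit'_carrier: "unit' n U \<Longrightarrow> U \<in> carrier_mat n n" by (simp add: unit'_def)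
lemma unit'_adj_carrier: "unit' n U \<Longrightarrow> mat_adjoint U \<in> carrier_mat n n" by (simp add: unit'_def)

lemma uu_cancel1: "unit' n U \<Longrightarrow> X \<in> carrier_mat n k \<Longrightarrow> mat_adjoint U * (U * X) = X"
proof -
  assume U: "unit' n U" and X: "X \<in> carrier_mat n k"
  have Uc: "U \<in> carrier_mat n n" and UA: "mat_adjoint U \<in> carrier_mat n n" using U by (auto simp: unit'_def)
  have "mat_adjoint U * (U * X) = (mat_adjoint U * U) * X" using assoc_mult_mat[OF UA Uc X] by simp
  also have "\<dots> = X" using U X by (simp add: unit'_def)
  finally show ?thesis .
qed

lemma uu_cancel2: "unit' n U \<Longrightarrow> X \<in> carrier_mat n k \<Longrightarrow> U * (mat_adjoint U * X) = X"
proof -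
  assume U: "unit' n U" and X: "X \<in> carrier_mat n k"
  have Uc: "U \<in> carrier_mat n n" and UA: "mat_adjoint U \<in> carrier_mat n n" using U by (auto simp: unit'_def)
  have "U * (mat_adjoint U * X) = (U * mat_adjoint U) * X" using assoc_mult_mat[OF Uc UA X] by simp
  also have "\<dots> = X" using U X by (simp add: unit'_def)
  finally show ?thesis .
qed

lemma unit'_eqs: "unit' n U \<Longrightarrow> mat_adjoint U * U = 1\<^sub>m n" "unit' n U \<Longrightarrow> U * mat_adjoint U = 1\<^sub>m n"
  by (simp_all add: unit'_def)

lemma dd_assoc: "Y \<in> carrier_mat n k \<Longrightarrow> mat_diag n f * (mat_diag n g * Y) = mat_diag n (\<lambda>i. f i * g i) * Y"
proof -
  assume Y: "Y \<in> carrier_mat n k"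
  have "mat_diag n f * (mat_diag n g * Y) = (mat_diag n f * mat_diag n g) * Y"
    using assoc_mult_mat[OF mat_diag_dim mat_diag_dim Y] by simp
  thus ?thesis by simp
qed

lemma diag_comm_fun:
  fixes C :: "complex mat"
  assumes C: "C \<in> carrier_mat n n"
    and eq: "dg n d * C = C * dg n e"
  shows "dg n (f \<circ> d) * C = C * dg n (f \<circ> e)"
proof (rule eq_matI)
  fix i j assume "i < dim_row (C * dg n (f \<circ> e))" "j < dim_col (C * dg n (f \<circ> e))"
  hence i: "i < n" and j: "j < n" using C by auto
  have "(dg n d * C) $$ (i,j) = (C * dg n e) $$ (i,j)" using eq by (simp only:)
  hence "complex_of_real (d i) * C $$ (i,j) = C $$ (i,j) * complex_of_real (e j)"
    unfolding mat_diag_mult_left[OF C] mat_diag_mult_right[OF C] using i j by simp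
  hence "C $$ (i,j) = 0 \<or> d i = e j" by (auto simp: mult.commute)
  hence "complex_of_real (f (d i)) * C $$ (i,j) = C $$ (i,j) * complex_of_real (f (e j))" by auto
  thus "(dg n (f \<circ> d) * C) $$ (i,j) = (C * dg n (f \<circ> e)) $$ (i,j)"
    unfolding mat_diag_mult_left[OF C] mat_diag_mult_right[OF C] using i j by simp
qed (use C in auto)

lemma fun_calc_unique:
  assumes U: "unit' n U" and V: "unit' n V"
    and eq: "U * dg n d * mat_adjoint U = V * dg n e * mat_adjoint V"
  shows "U * dg n (f \<circ> d) * mat_adjoint U = V * dg n (f \<circ> e) * mat_adjoint V"
proof -
  note as = assoc_mult_mat[of _ n n _ n _ n] and mc = mult_carrier_mat[of _ n n _ n]
  have Uc: "U \<in> carrier_mat n n" and UA: "mat_adjoint U \<in> carrier_mat n n"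
   and Vc: "V \<in> carrier_mat n n" and VA: "mat_adjoint V \<in> carrier_mat n n"
    using U V by (auto simp: unit'_def)
  define C where "C = mat_adjoint U * V"
  have Cc: "C \<in> carrier_mat n n" using UA Vc by (simp add: C_def mc)
  have "dg n d * C = mat_adjoint U * (U * dg n d * mat_adjoint U) * V"
    unfolding C_def using Uc UA Vc VA by (simp add: as mc uu_cancel1[OF U, where k=n] unit'_eqs[OF U] right_mult_one_mat[of _ n n])
  also have "\<dots> = mat_adjoint U * (V * dg n e * mat_adjoint V) * V" by (simp add: eq)
  also have "\<dots> = C * dg n e"
    unfolding C_def using Uc UA Vc VA by (simp add: as mc uu_cancel1[OF V, where k=n] unit'_eqs[OF V] right_mult_one_mat[of _ n n])
  finally have "dg n d * C = C * dg n e" .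
  from diag_comm_fun[OF Cc this, of f]
  have com: "dg n (f \<circ> d) * C = C * dg n (f \<circ> e)" .
  have "U * dg n (f \<circ> d) * mat_adjoint U = U * (dg n (f \<circ> d) * C) * mat_adjoint V"
    unfolding C_def using Uc UA Vc VA by (simp add: as mc uu_cancel2[OF V, where k=n] unit'_eqs[OF V] right_mult_one_mat[of _ n n])
  also have "\<dots> = U * (C * dg n (f \<circ> e)) * mat_adjoint V" unfolding com ..
  also have "\<dots> = V * dg n (f \<circ> e) * mat_adjoint V"
    unfolding C_def using Uc UA Vc VA by (simp add: as mc uu_cancel2[OF U, where k=n] unit'_eqs[OF U] right_mult_one_mat[of _ n n])
  finally show ?thesis .
qed

lemma mat_fun_eq:
  assumes U: "unit' n U" and A: "A = U * dg n d * mat_adjoint U"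
  shows "mat_fun n f A = U * dg n (f \<circ> d) * mat_adjoint U"
proof -
  define Q where "Q = (\<lambda>U d. unitary n U \<and> A = U * dg n d * mat_adjoint U)"
  have ex: "(\<lambda>p. case p of (U, d) \<Rightarrow> Q U d) (U, d)" using U A unit'_unitary by (simp add: Q_def)
  define p where "p = (SOME p. case p of (U, d) \<Rightarrow> Q U d)"
  have "case p of (U, d) \<Rightarrow> Q U d" unfolding p_def by (rule someI[of _ "(U,d)"]) (use ex in simp)
  then obtain U' d' where p: "p = (U', d')" and Q: "Q U' d'" by (cases p) auto
  have mf: "mat_fun n f A = U' * dg n (f \<circ> d') * mat_adjoint U'"
    unfolding mat_fun_def using p unfolding p_def Q_def by (simp add: comp_def)
  have U': "unit' n U'" using Q by (simp add: Q_def unitary_unit')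
  have "U' * dg n d' * mat_adjoint U' = U * dg n d * mat_adjoint U" using Q A by (simp add: Q_def)
  from fun_calc_unique[OF U' U this, of f] mf show ?thesis by simp
qed

lemma mtrace_udu: "unit' n U \<Longrightarrow> mtrace (U * mat_diag n g * mat_adjoint U) = (\<Sum>i<n. g i)"
proof -
  assume U: "unit' n U"
  have Uc: "U \<in> carrier_mat n n" and UA: "mat_adjoint U \<in> carrier_mat n n" using U by (auto simp: unit'_def)
  have "mtrace (U * mat_diag n g * mat_adjoint U) = mtrace (U * (mat_diag n g * mat_adjoint U))"
    using Uc UA by (simp add: assoc_mult_mat[of _ n n _ n _ n])
  also have "\<dots> = mtrace ((mat_diag n g * mat_adjoint U) * U)"
    by (rule mtrace_comm[OF Uc]) (use UA in \<open>simp add: mult_carrier_mat[of _ n n _ n]\<close>)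
  also have "\<dots> = mtrace (mat_diag n g)"
    using U UA Uc by (simp add: assoc_mult_mat[of _ n n _ n _ n] unit'_def right_mult_one_mat[OF mat_diag_dim])
  finally show ?thesis by (simp add: mtrace_diag)
qed

lemma trace_norm_herm:
  assumes V: "unit' n V" and X: "X = V * dg n l * mat_adjoint V"
  shows "trace_norm n X = (\<Sum>i<n. \<bar>l i\<bar>)"
proof -
  note as = assoc_mult_mat[of _ n n _ n _ n] and mc = mult_carrier_mat[of _ n n _ n]
  have Vc: "V \<in> carrier_mat n n" and VA: "mat_adjoint V \<in> carrier_mat n n" using V by (auto simp: unit'_def)
  have adjX: "mat_adjoint X = X" unfolding X using Vc VA
    by (simp add: adj_mult[of _ n n _ n] mc as)
  have "mat_adjoint X * X = V * (dg n l * dg n l) * mat_adjoint V"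
    unfolding adjX unfolding X using Vc VA by (simp add: as mc dd_assoc[of _ n n] uu_cancel1[OF V, where k=n] unit'_eqs[OF V] right_mult_one_mat[of _ n n])
  also have "dg n l * dg n l = dg n (\<lambda>i. l i * l i)" by simp
  finally have "mat_fun n sqrt (mat_adjoint X * X) = V * dg n (sqrt \<circ> (\<lambda>i. l i * l i)) * mat_adjoint V"
    by (rule mat_fun_eq[OF V])
  hence "trace_norm n X = Re (\<Sum>i<n. complex_of_real (sqrt (l i * l i)))"
    unfolding trace_norm_def by (simp add: mtrace_udu[OF V])
  thus ?thesis by simp
qed

lemma trace_norm_nonneg:
  assumes Y: "(Y :: complex mat) \<in> carrier_mat n n"
  shows "trace_norm n Y \<ge> 0"
proof -
  note as = assoc_mult_mat[of _ n n _ n _ n] and mc = mult_carrier_mat[of _ n n _ n]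
  have M: "mat_adjoint Y * Y \<in> carrier_mat n n" using Y by (simp add: mc)
  have "mat_adjoint (mat_adjoint Y * Y) = mat_adjoint Y * Y" using Y by (simp add: adj_mult[of _ n n _ n])
  from spectral[OF M this] obtain V m where V: "unit' n V" and eq: "mat_adjoint Y * Y = V * dg n m * mat_adjoint V" by blast
  have Vc: "V \<in> carrier_mat n n" and VA: "mat_adjoint V \<in> carrier_mat n n" using V by (auto simp: unit'_def)
  have mnn: "m i \<ge> 0" if i: "i < n" for i
  proof -
    have "mat_adjoint V * (mat_adjoint Y * Y) * V = dg n m"
      unfolding eq using Vc VA by (simp add: as mc uu_cancel1[OF V, where k=n] unit'_eqs[OF V] right_mult_one_mat[of _ n n])
    moreover have "mat_adjoint V * (mat_adjoint Y * Y) * V = mat_adjoint (Y * V) * (Y * V)"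
      using Y Vc VA by (simp add: adj_mult[of _ n n _ n] as mc)
    ultimately have eqd: "dg n m = mat_adjoint (Y * V) * (Y * V)" by simp
    have "complex_of_real (m i) = dg n m $$ (i,i)" using i by (simp add: mat_diag_def)
    also have "\<dots> = (mat_adjoint (Y * V) * (Y * V)) $$ (i,i)" unfolding eqd ..
    also have "\<dots> = (\<Sum>k<n. cnj ((Y*V) $$ (k,i)) * (Y*V) $$ (k,i))"
      by (rule uu_idx) (use Y Vc i in \<open>auto simp: mc\<close>)
    also have "\<dots> = (\<Sum>k<n. complex_of_real ((cmod ((Y*V) $$ (k,i)))^2))"
      by (rule sum.cong[OF refl]) (subst complex_norm_square, simp add: mult.commute)
    also have "\<dots> = complex_of_real (\<Sum>k<n. (cmod ((Y*V) $$ (k,i)))^2)"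
      by (rule of_real_sum[symmetric])
    finally have "m i = (\<Sum>k<n. (cmod ((Y*V) $$ (k,i)))^2)" using of_real_eq_iff by blast
    thus ?thesis by (simp add: sum_nonneg)
  qed
  have "mat_fun n sqrt (mat_adjoint Y * Y) = V * dg n (sqrt \<circ> m) * mat_adjoint V"
    by (rule mat_fun_eq[OF V eq])
  hence "trace_norm n Y = (\<Sum>i<n. sqrt (m i))"
    unfolding trace_norm_def by (simp add: mtrace_udu[OF V])
  thus ?thesis using mnn by (auto intro!: sum_nonneg)
qed



lemma dm_div[simp]: "c < (dB::nat) \<Longrightarrow> (a * dB + c) div dB = a"
  by simp
lemma dm_mod[simp]: "c < (dB::nat) \<Longrightarrow> (a * dB + c) mod dB = c"
  by simp

lemma shift_sum: "(\<Sum>k\<in>{m..<m+d}. g k) = (\<Sum>c<d. g (m + c))" for m d :: nat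
proof -
  have "(\<Sum>c<d. g (m + c)) = sum g ((\<lambda>c. m + c) ` {..<d})"
    by (subst sum.reindex) (auto simp: inj_on_def)
  also have "(\<lambda>c. m + c) ` {..<d} = {m..<m+d}"
  proof
    show "{m..<m+d} \<subseteq> (\<lambda>c. m + c) ` {..<d}"
    proof
      fix x assume "x \<in> {m..<m+d}"
      thus "x \<in> (\<lambda>c. m + c) ` {..<d}" by (intro image_eqI[of _ _ "x - m"]) auto
    qed
  qed auto
  finally show ?thesis by simp
qed

lemma sum_split: fixes dA dB :: nat and g :: "nat \<Rightarrow> 'a::comm_monoid_add"
  shows "(\<Sum>k<dA*dB. g k) = (\<Sum>a<dA. \<Sum>c<dB. g (a*dB + c))"
proof (induction dA)
  case 0 thus ?case by simp
next
  case (Suc dA)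
  have eqs: "{..<Suc dA * dB} = {..<dA*dB} \<union> {dA*dB..<dA*dB+dB}" by auto
  have "(\<Sum>k<Suc dA*dB. g k) = (\<Sum>k<dA*dB. g k) + (\<Sum>k\<in>{dA*dB..<dA*dB+dB}. g k)"
    unfolding eqs by (rule sum.union_disjoint) auto
  also have "(\<Sum>k\<in>{dA*dB..<dA*dB+dB}. g k) = (\<Sum>c<dB. g (dA*dB + c))"
    by (rule shift_sum)
  finally show ?case using Suc by simp
qed

lemma sum_split': fixes dA dB :: nat and g :: "nat \<Rightarrow> nat \<Rightarrow> 'a::comm_monoid_add"
  shows "(\<Sum>k<dA*dB. g (k div dB) (k mod dB)) = (\<Sum>a<dA. \<Sum>c<dB. g a c)"
  by (subst sum_split) (intro sum.cong refl, simp)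

lemma div_lt: "i < dA * dB \<Longrightarrow> i div dB < (dA::nat)"
  by (simp add: less_mult_imp_div_less)
lemma mod_lt: "i < dA * dB \<Longrightarrow> i mod dB < (dB::nat)"
  by (metis mod_less_divisor mult_0_right neq0_conv not_less0)

lemma idx_lt[simp]: "a < dA \<Longrightarrow> c < dB \<Longrightarrow> a * dB + c < dA * (dB::nat)"
proof -
  assume a: "a < dA" and c: "c < dB"
  have "a * dB + c < a * dB + dB" using c by simp
  also have "\<dots> = Suc a * dB" by simp
  also have "\<dots> \<le> dA * dB" using a by (intro mult_right_mono) auto
  finally show ?thesis .
qed

lemma ifm_r: "(x::complex) * (if P then y else 0) = (if P then x * y else 0)" by simp
lemma ifm_l: "(if P then y else 0) * (x::complex) = (if P then y * x else 0)" by simp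
lemma if_sum: "(\<Sum>c\<in>A. if P then F c else (0::complex)) = (if P then sum F A else 0)" by auto

lemmas delta_simps = ifm_r ifm_l if_sum sum.delta sum.delta'

lemma K_carrier[simp]: "M \<in> carrier_mat dB dB \<Longrightarrow> kron (1\<^sub>m dA) M \<in> carrier_mat (dA*dB) (dA*dB)"
proof -
  assume M: "M \<in> carrier_mat dB dB"
  hence "dim_row M = dB" "dim_col M = dB" by auto
  thus ?thesis by (simp add: kron_def)
qed

lemma K_idx: "M \<in> carrier_mat dB dB \<Longrightarrow> i < dA*dB \<Longrightarrow> j < dA*dB \<Longrightarrow>
   kron (1\<^sub>m dA) M $$ (i,j) = (if i div dB = j div dB then M $$ (i mod dB, j mod dB) else 0)"
proof -
  assume M: "M \<in> carrier_mat dB dB" and i: "i < dA*dB" and j: "j < dA*dB"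
  hence d: "dim_row M = dB" "dim_col M = dB" by auto
  show ?thesis using div_lt[OF i] div_lt[OF j] i j by (simp add: kron_def d)
qed

lemma K_mult: assumes A: "A \<in> carrier_mat dB dB" and B: "B \<in> carrier_mat dB dB"
  shows "kron (1\<^sub>m dA) A * kron (1\<^sub>m dA) B = kron (1\<^sub>m dA) (A * B)"
proof (rule eq_matI)
  fix i j assume "i < dim_row (kron (1\<^sub>m dA) (A * B))" "j < dim_col (kron (1\<^sub>m dA) (A * B))"
  hence i: "i < dA*dB" and j: "j < dA*dB" using A B by (auto simp: kron_def)
  have AB: "A * B \<in> carrier_mat dB dB" using A B by simp
  have "(kron (1\<^sub>m dA) A * kron (1\<^sub>m dA) B) $$ (i,j) =
     (\<Sum>k<dA*dB. kron (1\<^sub>m dA) A $$ (i,k) * kron (1\<^sub>m dA) B $$ (k,j))"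
    by (rule mult_idx[OF K_carrier[OF A] K_carrier[OF B] i j])
  also have "\<dots> = (\<Sum>k<dA*dB. (if i div dB = k div dB then A $$ (i mod dB, k mod dB) else 0) *
       (if k div dB = j div dB then B $$ (k mod dB, j mod dB) else 0))"
    by (rule sum.cong[OF refl]) (use i j A B in \<open>simp add: K_idx\<close>)
  also have "\<dots> = (\<Sum>a<dA. \<Sum>c<dB. (if i div dB = a then A $$ (i mod dB, c) else 0) *
       (if a = j div dB then B $$ (c, j mod dB) else 0))"
    by (rule sum_split')
  also have "\<dots> = (if i div dB = j div dB then (\<Sum>c<dB. A $$ (i mod dB, c) * B $$ (c, j mod dB)) else 0)"
    using div_lt[OF i] by (simp add: delta_simps)
  also have "\<dots> = kron (1\<^sub>m dA) (A * B) $$ (i,j)"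
    using i j mod_lt[OF i] mod_lt[OF j] by (simp add: K_idx[OF AB] mult_idx[OF A B])
  finally show "(kron (1\<^sub>m dA) A * kron (1\<^sub>m dA) B) $$ (i,j) = kron (1\<^sub>m dA) (A * B) $$ (i,j)" .
qed (use A B in \<open>auto simp: kron_def\<close>)

lemma K_adj: assumes M: "M \<in> carrier_mat dB dB"
  shows "mat_adjoint (kron (1\<^sub>m dA) M) = kron (1\<^sub>m dA) (mat_adjoint M)"
proof (rule eq_matI)
  have MA: "mat_adjoint M \<in> carrier_mat dB dB" using M by simp
  fix i j assume "i < dim_row (kron (1\<^sub>m dA) (mat_adjoint M))" "j < dim_col (kron (1\<^sub>m dA) (mat_adjoint M))"
  hence i: "i < dA*dB" and j: "j < dA*dB" using K_carrier[OF MA, of dA] by auto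
  show "mat_adjoint (kron (1\<^sub>m dA) M) $$ (i,j) = kron (1\<^sub>m dA) (mat_adjoint M) $$ (i,j)"
    using carrier_matD[OF K_carrier[OF M, of dA]] i j M mod_lt[OF i] mod_lt[OF j]
    by (auto simp: K_idx[OF M] K_idx[OF MA])
qed (use K_carrier[OF M, of dA] K_carrier[OF adj_carrier[OF M], of dA] in auto)

lemma K_diag: "kron (1\<^sub>m dA) (mat_diag dB f) = mat_diag (dA*dB) (\<lambda>k. f (k mod dB))"
proof (rule eq_matI)
  fix i j assume "i < dim_row (mat_diag (dA*dB) (\<lambda>k. f (k mod dB)))" "j < dim_col (mat_diag (dA*dB) (\<lambda>k. f (k mod dB)))"
  hence i: "i < dA*dB" and j: "j < dA*dB" by auto
  have iff: "i = j \<longleftrightarrow> i div dB = j div dB \<and> i mod dB = j mod dB"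
    by (metis div_mult_mod_eq)
  have "kron (1\<^sub>m dA) (mat_diag dB f) $$ (i,j) = (if i div dB = j div dB then mat_diag dB f $$ (i mod dB, j mod dB) else 0)"
    by (rule K_idx[OF mat_diag_dim i j])
  also have "\<dots> = mat_diag (dA*dB) (\<lambda>k. f (k mod dB)) $$ (i,j)"
    using i j mod_lt[OF i] mod_lt[OF j] iff by (auto simp: mat_diag_def)
  finally show "kron (1\<^sub>m dA) (mat_diag dB f) $$ (i,j) = mat_diag (dA*dB) (\<lambda>k. f (k mod dB)) $$ (i,j)" .
qed (use carrier_matD[OF K_carrier[OF mat_diag_dim[of dB f], of dA]] in auto)

lemma K_one: "kron (1\<^sub>m dA) (1\<^sub>m dB) = 1\<^sub>m (dA*dB)"
  using K_diag[of dA dB "\<lambda>_. 1"] by simp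

lemma K_unit: "unit' dB U \<Longrightarrow> unit' (dA*dB) (kron (1\<^sub>m dA) U)"
proof -
  assume u: "unit' dB U"
  hence U: "U \<in> carrier_mat dB dB" and UA: "mat_adjoint U \<in> carrier_mat dB dB" by (auto simp: unit'_def)
  show ?thesis unfolding unit'_def
    using u K_carrier[OF U, of dA] K_mult[OF UA U, of dA] K_mult[OF U UA, of dA]
    by (simp add: K_adj[OF U] K_one unit'_def)
qed

lemma K_smult: "kron (c \<cdot>\<^sub>m 1\<^sub>m dA) M = c \<cdot>\<^sub>m kron (1\<^sub>m dA) M"
  by (rule eq_matI) (auto simp: kron_def div_lt)

lemma mtrace_K: "M \<in> carrier_mat dB dB \<Longrightarrow> mtrace (kron (1\<^sub>m dA) M) = of_nat dA * mtrace M"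
proof -
  assume M: "M \<in> carrier_mat dB dB"
  have "mtrace (kron (1\<^sub>m dA) M) = (\<Sum>k<dA*dB. M $$ (k mod dB, k mod dB))"
    unfolding mtrace_def using K_carrier[OF M, of dA] by (auto simp: K_idx[OF M] intro!: sum.cong)
  also have "\<dots> = (\<Sum>a<dA. \<Sum>c<dB. M $$ (c,c))" by (rule sum_split'[where g = "\<lambda>a c. M $$ (c,c)"])
  finally show ?thesis using M by (simp add: mtrace_def)
qed

lemma ptrace_carrier[simp]: "ptrace_A dA dB R \<in> carrier_mat dB dB"
  by (simp add: ptrace_A_def)

lemma ptrace_dims[simp]: "dim_row (ptrace_A dA dB R) = dB" "dim_col (ptrace_A dA dB R) = dB"
  by (simp_all add: ptrace_A_def)

lemma ptrace_idx: "i < dB \<Longrightarrow> j < dB \<Longrightarrow> ptrace_A dA dB R $$ (i,j) = (\<Sum>a<dA. R $$ (a*dB + i, a*dB + j))"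
  by (simp add: ptrace_A_def)

lemma mtrace_RK: assumes R: "R \<in> carrier_mat (dA*dB) (dA*dB)" and M: "M \<in> carrier_mat dB dB"
  shows "mtrace (R * kron (1\<^sub>m dA) M) = mtrace (ptrace_A dA dB R * M)"
proof -
  have "mtrace (R * kron (1\<^sub>m dA) M) = (\<Sum>i<dA*dB. \<Sum>k<dA*dB. R $$ (i,k) * kron (1\<^sub>m dA) M $$ (k,i))"
    unfolding mtrace_def using R M by (auto simp: mult_idx[OF R K_carrier[OF M]] simp del: index_mult_mat(1) intro!: sum.cong)
  also have "\<dots> = (\<Sum>a<dA. \<Sum>c<dB. \<Sum>a'<dA. \<Sum>c'<dB. R $$ (a*dB+c, a'*dB+c') * kron (1\<^sub>m dA) M $$ (a'*dB+c', a*dB+c))"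
    by (simp only: sum_split)
  also have "\<dots> = (\<Sum>a<dA. \<Sum>c<dB. \<Sum>a'<dA. \<Sum>c'<dB. R $$ (a*dB+c, a'*dB+c') * (if a' = a then M $$ (c', c) else 0))"
    by (intro sum.cong refl) (simp add: K_idx[OF M])
  also have "\<dots> = (\<Sum>a<dA. \<Sum>c<dB. \<Sum>c'<dB. R $$ (a*dB+c, a*dB+c') * M $$ (c', c))"
    by (rule sum.cong[OF refl], rule sum.cong[OF refl]) (simp add: delta_simps)
  also have "\<dots> = (\<Sum>c<dB. \<Sum>c'<dB. \<Sum>a<dA. R $$ (a*dB+c, a*dB+c') * M $$ (c', c))"
    by (subst sum.swap) (simp add: sum.swap[of _ "{..<dA}"])
  also have "\<dots> = mtrace (ptrace_A dA dB R * M)"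
    unfolding mtrace_def using M
    by (auto simp: mult_idx[OF ptrace_carrier M] ptrace_idx sum_distrib_right simp del: index_mult_mat(1) intro!: sum.cong)
  finally show ?thesis .
qed

lemma ptrace_right: assumes R: "R \<in> carrier_mat (dA*dB) (dA*dB)" and M: "M \<in> carrier_mat dB dB"
  shows "ptrace_A dA dB (R * kron (1\<^sub>m dA) M) = ptrace_A dA dB R * M"
proof (rule eq_matI)
  fix b c assume "b < dim_row (ptrace_A dA dB R * M)" "c < dim_col (ptrace_A dA dB R * M)"
  hence b: "b < dB" and c: "c < dB" using M by auto
  have "ptrace_A dA dB (R * kron (1\<^sub>m dA) M) $$ (b,c) = (\<Sum>a<dA. \<Sum>k<dA*dB. R $$ (a*dB+b, k) * kron (1\<^sub>m dA) M $$ (k, a*dB+c))"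
    using b c by (auto simp: ptrace_idx mult_idx[OF R K_carrier[OF M]] simp del: index_mult_mat(1) intro!: sum.cong)
  also have "\<dots> = (\<Sum>a<dA. \<Sum>a'<dA. \<Sum>d<dB. R $$ (a*dB+b, a'*dB+d) * (if a' = a then M $$ (d, c) else 0))"
    using b c by (simp only: sum_split) (intro sum.cong refl, simp add: K_idx[OF M])
  also have "\<dots> = (\<Sum>a<dA. \<Sum>d<dB. R $$ (a*dB+b, a*dB+d) * M $$ (d, c))"
    by (rule sum.cong[OF refl]) (simp add: delta_simps)
  also have "\<dots> = (\<Sum>d<dB. (\<Sum>a<dA. R $$ (a*dB+b, a*dB+d)) * M $$ (d, c))"
    by (subst sum.swap) (simp add: sum_distrib_right)
  also have "\<dots> = (ptrace_A dA dB R * M) $$ (b,c)"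
    using b c M by (auto simp: mult_idx[OF ptrace_carrier M] ptrace_idx simp del: index_mult_mat(1) intro!: sum.cong)
  finally show "ptrace_A dA dB (R * kron (1\<^sub>m dA) M) $$ (b,c) = (ptrace_A dA dB R * M) $$ (b,c)" .
qed (use M in \<open>auto simp: ptrace_A_def\<close>)

lemma ptrace_left: assumes R: "R \<in> carrier_mat (dA*dB) (dA*dB)" and M: "M \<in> carrier_mat dB dB"
  shows "ptrace_A dA dB (kron (1\<^sub>m dA) M * R) = M * ptrace_A dA dB R"
proof (rule eq_matI)
  fix b c assume "b < dim_row (M * ptrace_A dA dB R)" "c < dim_col (M * ptrace_A dA dB R)"
  hence b: "b < dB" and c: "c < dB" using M by auto
  have "ptrace_A dA dB (kron (1\<^sub>m dA) M * R) $$ (b,c) = (\<Sum>a<dA. \<Sum>k<dA*dB. kron (1\<^sub>m dA) M $$ (a*dB+b, k) * R $$ (k, a*dB+c))"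
    using b c by (auto simp: ptrace_idx mult_idx[OF K_carrier[OF M] R] simp del: index_mult_mat(1) intro!: sum.cong)
  also have "\<dots> = (\<Sum>a<dA. \<Sum>a'<dA. \<Sum>d<dB. (if a = a' then M $$ (b, d) else 0) * R $$ (a'*dB+d, a*dB+c))"
    using b c by (simp only: sum_split) (intro sum.cong refl, simp add: K_idx[OF M])
  also have "\<dots> = (\<Sum>a<dA. \<Sum>d<dB. M $$ (b, d) * R $$ (a*dB+d, a*dB+c))"
    by (rule sum.cong[OF refl]) (simp add: delta_simps)
  also have "\<dots> = (\<Sum>d<dB. M $$ (b, d) * (\<Sum>a<dA. R $$ (a*dB+d, a*dB+c)))"
    by (subst sum.swap) (simp add: sum_distrib_left)
  also have "\<dots> = (M * ptrace_A dA dB R) $$ (b,c)"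
    using b c M by (auto simp: mult_idx[OF M ptrace_carrier] ptrace_idx simp del: index_mult_mat(1) intro!: sum.cong)
  finally show "ptrace_A dA dB (kron (1\<^sub>m dA) M * R) $$ (b,c) = (M * ptrace_A dA dB R) $$ (b,c)" .
qed (use M in \<open>auto simp: ptrace_A_def\<close>)



definition qf :: "complex mat \<Rightarrow> (nat \<Rightarrow> complex) \<Rightarrow> nat \<Rightarrow> complex" where
  "qf A u n = (\<Sum>i<n. \<Sum>j<n. cnj (u i) * A $$ (i,j) * u j)"

lemma qf_vec: assumes A: "A \<in> carrier_mat n n"
  shows "(A *\<^sub>v vec n u) \<bullet>c vec n u = qf A u n"
proof -
  have "(A *\<^sub>v vec n u) \<bullet>c vec n u = (\<Sum>i<n. (\<Sum>j<n. A $$ (i,j) * u j) * cnj (u i))"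
    using A by (auto simp: scalar_prod_def lessThan_atLeast0 intro!: sum.cong)
  also have "\<dots> = qf A u n"
    unfolding qf_def by (auto simp: sum_distrib_left sum_distrib_right mult.commute mult.left_commute intro!: sum.cong)
  finally show ?thesis .
qed

lemma psd_qf: "psd n A \<Longrightarrow> 0 \<le> Re (qf A u n)"
proof -
  assume p: "psd n A"
  hence A: "A \<in> carrier_mat n n" by (simp add: psd_def)
  have "0 \<le> Re ((A *\<^sub>v vec n u) \<bullet>c vec n u)" using p by (simp add: psd_def)
  thus ?thesis using qf_vec[OF A] by simp
qed

lemma qf_psd: assumes A: "A \<in> carrier_mat n n" and h: "mat_adjoint A = A"
  and q: "\<And>u. 0 \<le> Re (qf A u n)" shows "psd n A"
  unfolding psd_def hermitian_def
proof (intro conjI ballI A h)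
  fix v :: "complex vec" assume v: "v \<in> carrier_vec n"
  have "v = vec n (\<lambda>i. v $ i)" using v by auto
  hence "(A *\<^sub>v v) \<bullet>c v = qf A (\<lambda>i. v $ i) n" using qf_vec[OF A] by metis
  thus "0 \<le> Re ((A *\<^sub>v v) \<bullet>c v)" using q by simp
qed

lemma psd_carrier: "psd n A \<Longrightarrow> A \<in> carrier_mat n n" by (simp add: psd_def)

lemma psd_herm: "psd n A \<Longrightarrow> mat_adjoint A = A" by (simp add: psd_def hermitian_def)

lemma herm_idx: "A \<in> carrier_mat n n \<Longrightarrow> mat_adjoint A = A \<Longrightarrow> i < n \<Longrightarrow> j < n \<Longrightarrow> A $$ (i,j) = cnj (A $$ (j,i))"
  by (metis adj_index carrier_matD(1) carrier_matD(2))

lemma cnj_if: "cnj (if P then x else 0) = (if P then cnj x else 0)" by simp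

lemma sum4_swap: "(\<Sum>i<n. \<Sum>j<n. \<Sum>k<n. \<Sum>l<(n::nat). (F i j k l :: complex)) = (\<Sum>k<n. \<Sum>l<n. \<Sum>i<n. \<Sum>j<n. F i j k l)"
proof -
  have "(\<Sum>i<n. \<Sum>j<n. \<Sum>k<n. \<Sum>l<n. F i j k l) = (\<Sum>i<n. \<Sum>k<n. \<Sum>j<n. \<Sum>l<n. F i j k l)"
    by (rule sum.cong[OF refl], rule sum.swap)
  also have "\<dots> = (\<Sum>k<n. \<Sum>i<n. \<Sum>j<n. \<Sum>l<n. F i j k l)" by (rule sum.swap)
  also have "\<dots> = (\<Sum>k<n. \<Sum>i<n. \<Sum>l<n. \<Sum>j<n. F i j k l)"
    by (rule sum.cong[OF refl], rule sum.cong[OF refl], rule sum.swap)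
  also have "\<dots> = (\<Sum>k<n. \<Sum>l<n. \<Sum>i<n. \<Sum>j<n. F i j k l)"
    by (rule sum.cong[OF refl], rule sum.swap)
  finally show ?thesis .
qed

lemma sum_two: "i \<noteq> j \<Longrightarrow> i < n \<Longrightarrow> j < (n::nat) \<Longrightarrow>
  (\<Sum>l<n. f l * (if l = i then x else if l = j then y else 0)) = f i * x + f j * (y::complex)"
proof -
  assume ij: "i \<noteq> j" "i < n" "j < n"
  have "(\<Sum>l<n. f l * (if l = i then x else if l = j then y else 0)) =
        (\<Sum>l<n. (if l = i then f l * x else 0) + (if l = j then f l * y else 0))"
    using ij by (intro sum.cong) auto
  also have "\<dots> = f i * x + f j * y" using ij by (simp add: sum.distrib)
  finally show ?thesis .
qed

lemma sum_two': "i \<noteq> j \<Longrightarrow> i < n \<Longrightarrow> j < (n::nat) \<Longrightarrow>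
  (\<Sum>l<n. cnj (if l = i then x else if l = j then y else 0) * f l) = cnj x * f i + cnj y * (f j :: complex)"
proof -
  assume ij: "i \<noteq> j" "i < n" "j < n"
  have "(\<Sum>l<n. cnj (if l = i then x else if l = j then y else 0) * f l) =
        (\<Sum>l<n. (if l = i then cnj x * f l else 0) + (if l = j then cnj y * f l else 0))"
    using ij by (intro sum.cong) auto
  also have "\<dots> = cnj x * f i + cnj y * f j" using ij by (simp add: sum.distrib)
  finally show ?thesis .
qed

lemma qf_two: assumes "i \<noteq> j" "i < n" "j < n"
  shows "qf A (\<lambda>l. if l = i then x else if l = j then y else 0) n =
    cnj x * (A $$ (i,i) * x + A $$ (i,j) * y) + cnj y * (A $$ (j,i) * x + A $$ (j,j) * y)"
proof -
  let ?u = "\<lambda>l. if l = i then x else if l = j then y else 0"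
  have "qf A ?u n = (\<Sum>k<n. cnj (?u k) * (\<Sum>l<n. A $$ (k,l) * ?u l))"
    unfolding qf_def by (simp add: sum_distrib_left mult.assoc)
  also have "\<dots> = (\<Sum>k<n. cnj (?u k) * (A $$ (k,i) * x + A $$ (k,j) * y))"
    using assms by (simp add: sum_two)
  also have "\<dots> = cnj x * (A $$ (i,i) * x + A $$ (i,j) * y) + cnj y * (A $$ (j,i) * x + A $$ (j,j) * y)"
    using assms by (rule sum_two')
  finally show ?thesis .
qed

lemma psd_zero_row: assumes p: "psd n A" and i: "i < n" and z: "A $$ (i,i) = 0" and j: "j < n"
  shows "A $$ (i,j) = 0"
proof (cases "i = j")
  case True thus ?thesis using z by simp
next
  case False
  have A: "A \<in> carrier_mat n n" and h: "mat_adjoint A = A" using p by (auto simp: psd_def hermitian_def)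
  have hji: "A $$ (j,i) = cnj (A $$ (i,j))" using herm_idx[OF A h j i] .
  define a where "a = A $$ (i,j)"
  define t :: real where "t = (Re (A $$ (j,j)) + 1) / (2 * (cmod a)^2)"
  show ?thesis
  proof (rule ccontr)
    assume "A $$ (i,j) \<noteq> 0"
    hence a0: "a \<noteq> 0" by (simp add: a_def)
    hence ca: "(cmod a)^2 > 0" by simp
    define x where "x = - complex_of_real t * a"
    have "0 \<le> Re (qf A (\<lambda>l. if l = i then x else if l = j then 1 else 0) n)" by (rule psd_qf[OF p])
    also have "qf A (\<lambda>l. if l = i then x else if l = j then 1 else 0) n = cnj x * a + cnj a * x + A $$ (j,j)"
      using qf_two[OF False i j, of A x 1] z hji by (simp add: a_def algebra_simps)
    also have "Re (cnj x * a + cnj a * x + A $$ (j,j)) = - 2 * t * (cmod a)^2 + Re (A $$ (j,j))"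
    proof -
      have cm: "cmod a * cmod a = Re a * Re a + Im a * Im a" by (metis cmod_power2 power2_eq_square)
      show ?thesis unfolding x_def by (simp add: cm algebra_simps power2_eq_square)
    qed
    also have "\<dots> = -1" unfolding t_def using ca by (simp add: field_simps)
    finally show False by simp
  qed
qed

lemma psd_diag_real: assumes p: "psd n A" and i: "i < n"
  shows "A $$ (i,i) = complex_of_real (Re (A $$ (i,i)))" "0 \<le> Re (A $$ (i,i))"
proof -
  have A: "A \<in> carrier_mat n n" and h: "mat_adjoint A = A" using p by (auto simp: psd_def hermitian_def)
  have "A $$ (i,i) = cnj (A $$ (i,i))" using herm_idx[OF A h i i] .
  hence "Im (A $$ (i,i)) = 0" by (metis cnj.simps(2) neg_equal_zero)
  thus "A $$ (i,i) = complex_of_real (Re (A $$ (i,i)))" by (simp add: complex_eq_iff)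
  have "qf A (\<lambda>l. if l = i then 1 else 0) n = A $$ (i,i)"
    using i by (simp add: qf_def delta_simps cnj_if)
  thus "0 \<le> Re (A $$ (i,i))" using psd_qf[OF p, of "\<lambda>l. if l = i then 1 else 0"] by simp
qed

lemma qf_conj: assumes W: "W \<in> carrier_mat n n" and A: "A \<in> carrier_mat n n"
  shows "qf (mat_adjoint W * A * W) u n = qf A (\<lambda>k. \<Sum>j<n. W $$ (k,j) * u j) n"
proof -
  have e: "(mat_adjoint W * A * W) $$ (i,j) = (\<Sum>k<n. \<Sum>l<n. cnj (W $$ (k,i)) * A $$ (k,l) * W $$ (l,j))"
    if "i < n" "j < n" for i j
  proof -
    have WA: "mat_adjoint W * A \<in> carrier_mat n n" using W A by (simp add: mult_carrier_mat[of _ n n _ n])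
    have "(mat_adjoint W * A * W) $$ (i,j) = (\<Sum>l<n. (mat_adjoint W * A) $$ (i,l) * W $$ (l,j))"
      by (rule mult_idx[OF WA W that])
    also have "\<dots> = (\<Sum>l<n. (\<Sum>k<n. cnj (W $$ (k,i)) * A $$ (k,l)) * W $$ (l,j))"
      using that W A by (intro sum.cong refl) (simp add: uu_idx[OF W A] del: index_mult_mat(1))
    also have "\<dots> = (\<Sum>k<n. \<Sum>l<n. cnj (W $$ (k,i)) * A $$ (k,l) * W $$ (l,j))"
      by (simp add: sum_distrib_right) (rule sum.swap)
    finally show ?thesis .
  qed
  have "qf (mat_adjoint W * A * W) u n = (\<Sum>i<n. \<Sum>j<n. \<Sum>k<n. \<Sum>l<n. cnj (u i) * (cnj (W $$ (k,i)) * A $$ (k,l) * W $$ (l,j)) * u j)"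
    unfolding qf_def by (intro sum.cong refl) (simp add: e sum_distrib_left sum_distrib_right)
  also have "\<dots> = (\<Sum>k<n. \<Sum>l<n. \<Sum>i<n. \<Sum>j<n. cnj (u i) * (cnj (W $$ (k,i)) * A $$ (k,l) * W $$ (l,j)) * u j)"
    by (rule sum4_swap)
  also have "\<dots> = qf A (\<lambda>k. \<Sum>j<n. W $$ (k,j) * u j) n"
    unfolding qf_def
    by (intro sum.cong refl) (simp add: cnj_sum sum_distrib_left sum_distrib_right mult.commute mult.left_commute)
  finally show ?thesis .
qed

lemma psd_conj: assumes p: "psd n A" and W: "W \<in> carrier_mat n n"
  shows "psd n (mat_adjoint W * A * W)"
proof -
  have A: "A \<in> carrier_mat n n" and h: "mat_adjoint A = A" using p by (auto simp: psd_def hermitian_def)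
  have WA: "mat_adjoint W \<in> carrier_mat n n" using W by simp
  show ?thesis
  proof (rule qf_psd)
    show "mat_adjoint W * A * W \<in> carrier_mat n n" using W A WA by (simp add: mult_carrier_mat[of _ n n _ n])
    show "mat_adjoint (mat_adjoint W * A * W) = mat_adjoint W * A * W"
      using W A WA h by (simp add: adj_mult[of _ n n _ n] mult_carrier_mat[of _ n n _ n] assoc_mult_mat[of _ n n _ n _ n])
    fix u show "0 \<le> Re (qf (mat_adjoint W * A * W) u n)" unfolding qf_conj[OF W A] by (rule psd_qf[OF p])
  qed
qed

lemma ptrace_psd: assumes p: "psd (dA*dB) R"
  shows "psd dB (ptrace_A dA dB R)"
proof -
  have R: "R \<in> carrier_mat (dA*dB) (dA*dB)" and h: "mat_adjoint R = R" using p by (auto simp: psd_def hermitian_def)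
  show ?thesis
  proof (rule qf_psd)
    show "ptrace_A dA dB R \<in> carrier_mat dB dB" by simp
    show "mat_adjoint (ptrace_A dA dB R) = ptrace_A dA dB R"
    proof (rule eq_matI)
      fix i j assume "i < dim_row (ptrace_A dA dB R)" "j < dim_col (ptrace_A dA dB R)"
      hence i: "i < dB" and j: "j < dB" by auto
      show "mat_adjoint (ptrace_A dA dB R) $$ (i,j) = ptrace_A dA dB R $$ (i,j)"
        using i j by (auto simp: ptrace_idx cnj_sum herm_idx[OF R h, of "_ * dB + i" "_ * dB + j"] intro!: sum.cong)
    qed auto
    fix u
    define w where "w = (\<lambda>a k. if k div dB = a then u (k mod dB) else (0::complex))"
    have qa: "qf R (w a) (dA*dB) = (\<Sum>c<dB. \<Sum>c'<dB. cnj (u c) * R $$ (a*dB+c, a*dB+c') * u c')" if a: "a < dA" for a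
    proof -
      have "qf R (w a) (dA*dB) = (\<Sum>a1<dA. \<Sum>c<dB. \<Sum>a2<dA. \<Sum>c'<dB.
          cnj (if a1 = a then u c else 0) * R $$ (a1*dB+c, a2*dB+c') * (if a2 = a then u c' else 0))"
        unfolding qf_def w_def by (simp only: sum_split) (intro sum.cong refl, simp)
      also have "\<dots> = (\<Sum>c<dB. \<Sum>c'<dB. cnj (u c) * R $$ (a*dB+c, a*dB+c') * u c')"
        using a by (simp add: delta_simps cnj_if)
      finally show ?thesis .
    qed
    have "(\<Sum>a<dA. qf R (w a) (dA*dB)) = (\<Sum>a<dA. \<Sum>c<dB. \<Sum>c'<dB. cnj (u c) * R $$ (a*dB+c, a*dB+c') * u c')"
      by (rule sum.cong[OF refl]) (simp add: qa)
    also have "\<dots> = (\<Sum>c<dB. \<Sum>c'<dB. \<Sum>a<dA. cnj (u c) * R $$ (a*dB+c, a*dB+c') * u c')"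
      by (subst sum.swap, rule sum.cong[OF refl], rule sum.swap)
    also have "\<dots> = qf (ptrace_A dA dB R) u dB"
      unfolding qf_def by (intro sum.cong refl) (simp add: ptrace_idx sum_distrib_left sum_distrib_right)
    finally have "qf (ptrace_A dA dB R) u dB = (\<Sum>a<dA. qf R (w a) (dA*dB))" by simp
    moreover have "0 \<le> Re (\<Sum>a<dA. qf R (w a) (dA*dB))"
      using psd_qf[OF p] by (simp add: sum_nonneg)
    ultimately show "0 \<le> Re (qf (ptrace_A dA dB R) u dB)" by simp
  qed
qed



lemma cs_real: assumes A: "finite A"
  shows "(\<Sum>i\<in>A. x i * y i) \<le> sqrt (\<Sum>i\<in>A. (x i)^2) * sqrt (\<Sum>i\<in>A. (y i)^2)"
proof -
  define a where "a = sqrt (\<Sum>i\<in>A. (x i)^2)"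
  define b where "b = sqrt (\<Sum>i\<in>A. (y i)^2)"
  have X2: "(\<Sum>i\<in>A. (x i)^2) \<ge> 0" and Y2: "(\<Sum>i\<in>A. (y i)^2) \<ge> 0" by (auto intro: sum_nonneg)
  have a2: "a^2 = (\<Sum>i\<in>A. (x i)^2)" and b2: "b^2 = (\<Sum>i\<in>A. (y i)^2)"
    using X2 Y2 by (simp_all add: a_def b_def)
  show ?thesis
  proof (cases "a = 0 \<or> b = 0")
    case True
    hence "(\<forall>i\<in>A. x i = 0) \<or> (\<forall>i\<in>A. y i = 0)"
      using A by (auto simp: a_def b_def sum_nonneg_eq_0_iff)
    hence "(\<Sum>i\<in>A. x i * y i) = 0" by auto
    thus ?thesis using mult_nonneg_nonneg[OF real_sqrt_ge_zero[OF X2] real_sqrt_ge_zero[OF Y2]] by simp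
  next
    case False
    have ab: "a > 0" "b > 0" using False X2 Y2 by (auto simp: a_def b_def)
    have "(\<Sum>i\<in>A. 2 * a * b * (x i * y i)) \<le> (\<Sum>i\<in>A. b^2 * (x i)^2 + a^2 * (y i)^2)"
    proof (rule sum_mono)
      fix i
      have "0 \<le> (b * x i - a * y i)^2" by simp
      thus "2 * a * b * (x i * y i) \<le> b^2 * (x i)^2 + a^2 * (y i)^2"
        by (simp add: power2_eq_square algebra_simps)
    qed
    also have "\<dots> = b^2 * a^2 + a^2 * b^2" by (simp add: sum.distrib sum_distrib_left a2 b2)
    finally have "2 * a * b * (\<Sum>i\<in>A. x i * y i) \<le> 2 * a * b * (a * b)"
      by (simp add: sum_distrib_left power2_eq_square algebra_simps)
    hence "(\<Sum>i\<in>A. x i * y i) \<le> a * b" using ab by simp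
    thus ?thesis by (simp add: a_def b_def)
  qed
qed

lemma cs_real2: "(\<Sum>i<(N::nat). \<Sum>j<N. x i j * y i j) \<le>
   sqrt (\<Sum>i<N. \<Sum>j<N. (x i j)^2) * sqrt (\<Sum>i<N. \<Sum>j<N. (y i j)^2)"
proof -
  have "(\<Sum>i<N. \<Sum>j<N. x i j * y i j) = (\<Sum>p\<in>{..<N}\<times>{..<N}. x (fst p) (snd p) * y (fst p) (snd p))"
    by (simp add: sum.cartesian_product split_def)
  also have "\<dots> \<le> sqrt (\<Sum>p\<in>{..<N}\<times>{..<N}. (x (fst p) (snd p))^2) * sqrt (\<Sum>p\<in>{..<N}\<times>{..<N}. (y (fst p) (snd p))^2)"
    by (rule cs_real) simp
  also have "\<dots> = sqrt (\<Sum>i<N. \<Sum>j<N. (x i j)^2) * sqrt (\<Sum>i<N. \<Sum>j<N. (y i j)^2)"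
    by (simp add: sum.cartesian_product split_def)
  finally show ?thesis .
qed

definition isq :: "real \<Rightarrow> real" where "isq x = (if x > 0 then 1 / sqrt x else 0)"

lemma isq_nonneg: "isq x \<ge> 0" by (simp add: isq_def)

lemma trace_XDXD: assumes X: "X \<in> carrier_mat N N" and hX: "mat_adjoint X = X"
  shows "Re (mtrace (X * dg N fk * X * dg N fk)) = (\<Sum>i<N. \<Sum>j<N. (cmod (X $$ (i,j)))^2 * (fk i * fk j))"
proof -
  have XD: "X * dg N fk \<in> carrier_mat N N" using X by (simp add: mult_carrier_mat[of _ N N _ N])
  have XDX: "X * dg N fk * X \<in> carrier_mat N N" using XD X by (simp add: mult_carrier_mat[of _ N N _ N])
  have XDi: "\<And>i j. i < N \<Longrightarrow> j < N \<Longrightarrow> (X * dg N fk) $$ (i,j) = X $$ (i,j) * complex_of_real (fk j)"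
    using X by (simp add: mat_diag_mult_right[OF X])
  have "mtrace (X * dg N fk * X * dg N fk) = (\<Sum>i<N. (X * dg N fk * X) $$ (i,i) * complex_of_real (fk i))"
    unfolding mtrace_def using XDX by (simp add: mat_diag_mult_right[OF XDX])
  also have "\<dots> = (\<Sum>i<N. \<Sum>j<N. X $$ (i,j) * complex_of_real (fk j) * X $$ (j,i) * complex_of_real (fk i))"
    by (intro sum.cong refl)
       (simp add: mult_idx[OF XD X] XDi sum_distrib_right del: index_mult_mat(1))
  also have "\<dots> = (\<Sum>i<N. \<Sum>j<N. complex_of_real ((cmod (X $$ (i,j)))^2 * (fk i * fk j)))"
  proof (intro sum.cong refl)
    fix i j assume "i \<in> {..<N}" "j \<in> {..<N}"
    hence e: "X $$ (j,i) = cnj (X $$ (i,j))" using herm_idx[OF X hX, of j i] by simp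
    show "X $$ (i,j) * complex_of_real (fk j) * X $$ (j,i) * complex_of_real (fk i) =
        complex_of_real ((cmod (X $$ (i,j)))^2 * (fk i * fk j))"
      unfolding e of_real_mult complex_norm_square by (simp only: mult_ac)
  qed
  finally show ?thesis by (simp add: Re_sum)
qed

lemma col_norm: assumes S: "S \<in> carrier_mat N N" and SS: "mat_adjoint S * S = 1\<^sub>m N" and i: "i < N"
  shows "(\<Sum>j<N. (cmod (S $$ (j,i)))^2) = 1"
proof -
  have "(mat_adjoint S * S) $$ (i,i) = (\<Sum>j<N. cnj (S $$ (j,i)) * S $$ (j,i))"
    by (rule uu_idx[OF S S i i])
  also have "\<dots> = (\<Sum>j<N. complex_of_real ((cmod (S $$ (j,i)))^2))"
    by (rule sum.cong[OF refl]) (simp only: complex_norm_square mult.commute)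
  also have "\<dots> = complex_of_real (\<Sum>j<N. (cmod (S $$ (j,i)))^2)"
    by (rule of_real_sum[symmetric])
  finally have eq: "(mat_adjoint S * S) $$ (i,i) = complex_of_real (\<Sum>j<N. (cmod (S $$ (j,i)))^2)" .
  have "(mat_adjoint S * S) $$ (i,i) = 1" using SS i by simp
  hence "complex_of_real (\<Sum>j<N. (cmod (S $$ (j,i)))^2) = 1" using eq by simp
  thus ?thesis by (metis of_real_eq_1_iff)
qed

lemma main_ineq:
  fixes X S :: "complex mat" and tt :: "nat \<Rightarrow> real"
  assumes X: "X \<in> carrier_mat N N" and hX: "mat_adjoint X = X"
    and S: "S \<in> carrier_mat N N" and hS: "mat_adjoint S = S" and SS: "mat_adjoint S * S = 1\<^sub>m N"
    and tt: "\<And>i. tt i \<ge> 0"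
    and z: "\<And>i j. i < N \<Longrightarrow> j < N \<Longrightarrow> tt i = 0 \<or> tt j = 0 \<Longrightarrow> X $$ (i,j) = 0"
  shows "Re (mtrace (X * S)) \<le> sqrt (Re (mtrace (X * dg N (\<lambda>i. isq (tt i)) * X * dg N (\<lambda>i. isq (tt i))))) * sqrt (\<Sum>i<N. tt i)"
proof -
  define fk where "fk = (\<lambda>i. isq (tt i))"
  define g where "g = (\<lambda>i. sqrt (tt i))"
  define x where "x = (\<lambda>i j. cmod (X $$ (i,j)) * sqrt (fk i * fk j))"
  define y where "y = (\<lambda>i j. cmod (S $$ (j,i)) * sqrt (g i * g j))"
  have fk0: "fk i \<ge> 0" for i by (simp add: fk_def isq_nonneg)
  have g0: "g i \<ge> 0" for i using tt[of i] by (simp add: g_def)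
  have "Re (mtrace (X * S)) = (\<Sum>i<N. \<Sum>j<N. Re (X $$ (i,j) * S $$ (j,i)))"
    unfolding mtrace_def using X S by (simp add: mult_idx[OF X S] Re_sum del: index_mult_mat(1))
  also have "\<dots> \<le> (\<Sum>i<N. \<Sum>j<N. cmod (X $$ (i,j)) * cmod (S $$ (j,i)))"
    by (intro sum_mono) (metis complex_Re_le_cmod norm_mult)
  also have "\<dots> = (\<Sum>i<N. \<Sum>j<N. x i j * y i j)"
  proof (intro sum.cong refl)
    fix i j assume i: "i \<in> {..<N}" and j: "j \<in> {..<N}"
    show "cmod (X $$ (i,j)) * cmod (S $$ (j,i)) = x i j * y i j"
    proof (cases "tt i = 0 \<or> tt j = 0")
      case True thus ?thesis using z[of i j] i j by (simp add: x_def y_def)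
    next
      case False
      hence p: "tt i > 0" "tt j > 0" using tt[of i] tt[of j] by auto
      have f1: "fk i * g i = 1" "fk j * g j = 1" using p by (simp_all add: fk_def g_def isq_def)
      have "sqrt (fk i * fk j) * sqrt (g i * g j) = sqrt ((fk i * g i) * (fk j * g j))"
        by (subst real_sqrt_mult[symmetric]) (simp only: mult_ac)
      hence "sqrt (fk i * fk j) * sqrt (g i * g j) = 1" using f1 by simp
      thus ?thesis by (simp add: x_def y_def algebra_simps)
    qed
  qed
  also have "\<dots> \<le> sqrt (\<Sum>i<N. \<Sum>j<N. (x i j)^2) * sqrt (\<Sum>i<N. \<Sum>j<N. (y i j)^2)"
    by (rule cs_real2)
  finally have calc: "Re (mtrace (X * S)) \<le> sqrt (\<Sum>i<N. \<Sum>j<N. (x i j)^2) * sqrt (\<Sum>i<N. \<Sum>j<N. (y i j)^2)" .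
  have xe: "(\<Sum>i<N. \<Sum>j<N. (x i j)^2) = Re (mtrace (X * dg N fk * X * dg N fk))"
    unfolding trace_XDXD[OF X hX] x_def using fk0
    by (intro sum.cong refl) (simp add: power_mult_distrib zero_le_mult_iff)
  have yb: "(\<Sum>i<N. \<Sum>j<N. (y i j)^2) \<le> (\<Sum>i<N. tt i)"
  proof -
    have "(\<Sum>i<N. \<Sum>j<N. (y i j)^2) = (\<Sum>i<N. \<Sum>j<N. (cmod (S $$ (j,i)))^2 * (g i * g j))"
      unfolding y_def using g0 by (intro sum.cong refl) (simp add: power_mult_distrib zero_le_mult_iff)
    also have "\<dots> \<le> (\<Sum>i<N. \<Sum>j<N. (cmod (S $$ (j,i)))^2 * ((tt i + tt j) / 2))"
    proof (intro sum_mono mult_left_mono)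
      fix i j
      have "0 \<le> (g i - g j)^2" by simp
      moreover have "(g i)^2 = tt i" "(g j)^2 = tt j" using tt by (simp_all add: g_def)
      ultimately show "g i * g j \<le> (tt i + tt j) / 2" by (simp add: power2_eq_square algebra_simps)
    qed (use tt in auto)
    also have "\<dots> = (\<Sum>i<N. tt i * (\<Sum>j<N. (cmod (S $$ (j,i)))^2)) / 2 +
                    (\<Sum>j<N. tt j * (\<Sum>i<N. (cmod (S $$ (j,i)))^2)) / 2"
      by (simp add: sum_distrib_left sum_distrib_right sum.distrib add_divide_distrib algebra_simps sum_divide_distrib)
         (subst sum.swap, simp)
    also have "\<dots> = (\<Sum>i<N. tt i)"
    proof -
      have c1: "(\<Sum>j<N. (cmod (S $$ (j,i)))^2) = 1" if "i < N" for i by (rule col_norm[OF S SS that])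
      have c2: "(\<Sum>i<N. (cmod (S $$ (j,i)))^2) = 1" if j: "j < N" for j
      proof -
        have "(\<Sum>i<N. (cmod (S $$ (j,i)))^2) = (\<Sum>i<N. (cmod (S $$ (i,j)))^2)"
        proof (intro sum.cong refl)
          fix i assume "i \<in> {..<N}"
          hence "S $$ (j,i) = cnj (S $$ (i,j))" using herm_idx[OF S hS, of j i] j by simp
          thus "(cmod (S $$ (j,i)))^2 = (cmod (S $$ (i,j)))^2" by simp
        qed
        thus ?thesis using c1[OF j] by simp
      qed
      show ?thesis using c1 c2 by simp
    qed
    finally show ?thesis .
  qed
  have "sqrt (\<Sum>i<N. \<Sum>j<N. (x i j)^2) * sqrt (\<Sum>i<N. \<Sum>j<N. (y i j)^2) \<le>
      sqrt (Re (mtrace (X * dg N fk * X * dg N fk))) * sqrt (\<Sum>i<N. tt i)"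
    unfolding xe by (rule mult_left_mono[OF real_sqrt_le_mono[OF yb] real_sqrt_ge_zero]) (simp add: xe[symmetric] sum_nonneg)
  with calc show ?thesis unfolding fk_def by linarith
qed



lemma gamma_id:
  fixes R P :: "complex mat"
  assumes R: "R \<in> carrier_mat (dA*dB) (dA*dB)" and P: "P \<in> carrier_mat dB dB" and dA: "dA > 0"
  shows "mtrace ((R - kron ((1 / of_nat dA) \<cdot>\<^sub>m 1\<^sub>m dA) (ptrace_A dA dB R)) * kron (1\<^sub>m dA) P *
                 ((R - kron ((1 / of_nat dA) \<cdot>\<^sub>m 1\<^sub>m dA) (ptrace_A dA dB R)) * kron (1\<^sub>m dA) P))
       = mtrace ((R * kron (1\<^sub>m dA) P) * (R * kron (1\<^sub>m dA) P))
         - mtrace (ptrace_A dA dB R * P * ptrace_A dA dB R * P) / of_nat dA"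
proof -
  define N where "N = dA * dB"
  define \<rho> where "\<rho> = ptrace_A dA dB R"
  define c :: complex where "c = 1 / of_nat dA"
  define K where "K = kron (1\<^sub>m dA) P"
  define L where "L = kron (1\<^sub>m dA) \<rho>"
  have Rc: "R \<in> carrier_mat N N" using R by (simp add: N_def)
  have \<rho>c: "\<rho> \<in> carrier_mat dB dB" by (simp add: \<rho>_def)
  have Kc: "K \<in> carrier_mat N N" unfolding K_def N_def by (rule K_carrier[OF P])
  have Lc: "L \<in> carrier_mat N N" unfolding L_def N_def by (rule K_carrier[OF \<rho>c])
  note mc = mult_carrier_mat[of _ N N _ N]
  have E: "kron ((1 / of_nat dA) \<cdot>\<^sub>m 1\<^sub>m dA) \<rho> = c \<cdot>\<^sub>m L" by (simp add: K_smult c_def L_def)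
  define A where "A = R * K"
  define M where "M = kron (1\<^sub>m dA) (\<rho> * P)"
  have Ac: "A \<in> carrier_mat N N" using Rc Kc by (simp add: A_def mc)
  have Mc: "M \<in> carrier_mat N N" unfolding M_def N_def by (rule K_carrier) (use \<rho>c P in simp)
  have B: "(c \<cdot>\<^sub>m L) * K = c \<cdot>\<^sub>m M"
  proof -
    have "L * K = M" unfolding L_def K_def M_def by (rule K_mult[OF \<rho>c P])
    thus ?thesis using mult_smult_assoc_mat[OF Lc Kc, of c] by simp
  qed
  have cLc: "c \<cdot>\<^sub>m L \<in> carrier_mat N N" using Lc by simp
  have cMc: "c \<cdot>\<^sub>m M \<in> carrier_mat N N" using Mc by simp
  have XK: "(R - c \<cdot>\<^sub>m L) * K = A - c \<cdot>\<^sub>m M"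
    by (simp add: minus_mult_distrib_mat[OF Rc cLc Kc] A_def B)
  have sq: "(A - c \<cdot>\<^sub>m M) * (A - c \<cdot>\<^sub>m M) = (A * A - A * (c \<cdot>\<^sub>m M)) - (c \<cdot>\<^sub>m M * A - c \<cdot>\<^sub>m M * (c \<cdot>\<^sub>m M))"
  proof -
    have AmM: "A - c \<cdot>\<^sub>m M \<in> carrier_mat N N" by (rule minus_carrier_mat[OF cMc])
    show ?thesis unfolding minus_mult_distrib_mat[OF Ac cMc AmM] mult_minus_distrib_mat[OF Ac Ac cMc]
        mult_minus_distrib_mat[OF cMc Ac cMc] ..
  qed
  define t0 where "t0 = mtrace (\<rho> * P * \<rho> * P)"
  have PrP: "P * (\<rho> * P) \<in> carrier_mat dB dB" using P \<rho>c by simp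
  have tAM: "mtrace (A * M) = t0"
  proof -
    have "A * M = R * (K * M)" using Rc Kc Mc by (simp add: A_def assoc_mult_mat[OF Rc Kc Mc])
    also have "K * M = kron (1\<^sub>m dA) (P * (\<rho> * P))" unfolding K_def M_def by (rule K_mult[OF P]) (use \<rho>c P in simp)
    finally have "mtrace (A * M) = mtrace (\<rho> * (P * (\<rho> * P)))"
      using mtrace_RK[OF R PrP] by (simp add: \<rho>_def)
    also have "\<rho> * (P * (\<rho> * P)) = \<rho> * P * \<rho> * P" using \<rho>c P by (simp add: assoc_mult_mat[of _ dB dB _ dB _ dB])
    finally show ?thesis by (simp add: t0_def)
  qed
  have tMM: "mtrace (M * M) = of_nat dA * t0"
  proof -
    have "M * M = kron (1\<^sub>m dA) (\<rho> * P * (\<rho> * P))" unfolding M_def by (rule K_mult[of _ dB]) (use \<rho>c P in simp_all)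
    moreover have "\<rho> * P * (\<rho> * P) \<in> carrier_mat dB dB"
      by (rule mult_carrier_mat[OF mult_carrier_mat[OF \<rho>c P] mult_carrier_mat[OF \<rho>c P]])
    ultimately have "mtrace (M * M) = of_nat dA * mtrace (\<rho> * P * (\<rho> * P))" using mtrace_K by metis
    also have "\<rho> * P * (\<rho> * P) = \<rho> * P * \<rho> * P" using \<rho>c P by (simp add: assoc_mult_mat[of _ dB dB _ dB _ dB])
    finally show ?thesis by (simp add: t0_def)
  qed
  have "mtrace ((A - c \<cdot>\<^sub>m M) * (A - c \<cdot>\<^sub>m M)) =
      mtrace (A * A) - mtrace (A * (c \<cdot>\<^sub>m M)) - (mtrace (c \<cdot>\<^sub>m M * A) - mtrace (c \<cdot>\<^sub>m M * (c \<cdot>\<^sub>m M)))"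
    unfolding sq using Ac cMc by (simp add: mtrace_minus[of _ N] mc minus_carrier_mat)
  also have "mtrace (c \<cdot>\<^sub>m M * A) = mtrace (A * (c \<cdot>\<^sub>m M))" by (rule mtrace_comm[OF cMc Ac])
  also have "mtrace (A * (c \<cdot>\<^sub>m M)) = c * t0"
    using Ac Mc by (simp add: mult_smult_distrib[OF Ac Mc] mtrace_smult[of _ N] mc tAM)
  also have "mtrace (c \<cdot>\<^sub>m M * (c \<cdot>\<^sub>m M)) = c * c * (of_nat dA * t0)"
    using Mc by (simp add: mult_smult_distrib[OF cMc Mc] mult_smult_assoc_mat[OF Mc Mc] mtrace_smult[of _ N] mc tMM)
  finally have main: "mtrace ((A - c \<cdot>\<^sub>m M) * (A - c \<cdot>\<^sub>m M)) = mtrace (A * A) - 2 * c * t0 + c * c * of_nat dA * t0"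
    by (simp add: algebra_simps)
  have "c * c * of_nat dA = c" using dA by (simp add: c_def)
  hence "mtrace ((A - c \<cdot>\<^sub>m M) * (A - c \<cdot>\<^sub>m M)) = mtrace (A * A) - t0 / of_nat dA"
    using main by (simp add: c_def algebra_simps)
  thus ?thesis unfolding \<rho>_def[symmetric] K_def[symmetric] E XK A_def[symmetric] t0_def[symmetric] .
qed



lemma support_Q:
  assumes U: "unit' dB U" and T: "T = U * dg dB t * mat_adjoint U"
    and \<rho>c: "\<rho> \<in> carrier_mat dB dB" and h\<rho>: "mat_adjoint \<rho> = \<rho>"
    and sp: "supp dB \<rho> \<subseteq> supp dB T" and b: "b < dB" and c: "c < dB" and tb: "t b = 0"
  shows "(mat_adjoint U * \<rho> * U) $$ (b,c) = 0" "(mat_adjoint U * \<rho> * U) $$ (c,b) = 0"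
proof -
  note as = assoc_mult_mat[of _ dB dB _ dB _ dB] and mc = mult_carrier_mat[of _ dB dB _ dB]
  have Uc: "U \<in> carrier_mat dB dB" and UA: "mat_adjoint U \<in> carrier_mat dB dB" using U by (auto simp: unit'_def)
  have Tc: "T \<in> carrier_mat dB dB" unfolding T using Uc UA by (simp add: mc)
  have cU: "col U c \<in> carrier_vec dB" by (rule carrier_vecI) (use Uc in auto)
  have "\<rho> *\<^sub>v col U c \<in> supp dB \<rho>" unfolding supp_def using cU by blast
  with sp obtain w where w: "w \<in> carrier_vec dB" and yw: "\<rho> *\<^sub>v col U c = T *\<^sub>v w" unfolding supp_def by blast
  have DU: "mat_adjoint U * T = dg dB t * mat_adjoint U"
    unfolding T using Uc UA by (simp add: as mc uu_cancel1[OF U, where k=dB])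
  have "(mat_adjoint U * \<rho> * U) $$ (b,c) = (mat_adjoint U * (\<rho> * U)) $$ (b,c)"
    using assoc_mult_mat[OF UA \<rho>c Uc] by simp
  also have "\<dots> = row (mat_adjoint U) b \<bullet> col (\<rho> * U) c" using b c UA Uc \<rho>c by simp
  also have "col (\<rho> * U) c = \<rho> *\<^sub>v col U c" by (rule col_mult2[OF \<rho>c Uc c])
  also have "row (mat_adjoint U) b \<bullet> (\<rho> *\<^sub>v col U c) = (mat_adjoint U *\<^sub>v (T *\<^sub>v w)) $ b"
    using b carrier_matD[OF UA] yw by simp
  also have "\<dots> = ((mat_adjoint U * T) *\<^sub>v w) $ b" using assoc_mult_mat_vec[OF UA Tc w] by simp
  also have "\<dots> = ((dg dB t * mat_adjoint U) *\<^sub>v w) $ b" by (simp add: DU)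
  also have "\<dots> = 0" using b w tb by (simp add: mat_diag_mult_left[OF UA] scalar_prod_def)
  finally show z: "(mat_adjoint U * \<rho> * U) $$ (b,c) = 0" .
  have Qc: "mat_adjoint U * \<rho> * U \<in> carrier_mat dB dB" using UA \<rho>c Uc by (simp add: mc)
  have hQ: "mat_adjoint (mat_adjoint U * \<rho> * U) = mat_adjoint U * \<rho> * U"
    using UA \<rho>c Uc h\<rho> by (simp add: adj_mult[of _ dB dB _ dB] mc as)
  show "(mat_adjoint U * \<rho> * U) $$ (c,b) = 0" using herm_idx[OF Qc hQ c b] z by simp
qed

lemma Rprime_zero:
  assumes p: "psd (dA*dB) R" and U: "unit' dB U" and k: "k < dA*dB"
    and z: "(mat_adjoint U * ptrace_A dA dB R * U) $$ (k mod dB, k mod dB) = 0"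
    and j: "j < dA*dB"
  shows "(kron (1\<^sub>m dA) (mat_adjoint U) * R * kron (1\<^sub>m dA) U) $$ (k,j) = 0"
        "(kron (1\<^sub>m dA) (mat_adjoint U) * R * kron (1\<^sub>m dA) U) $$ (j,k) = 0"
proof -
  define N where "N = dA * dB"
  define W where "W = kron (1\<^sub>m dA) U"
  have Uc: "U \<in> carrier_mat dB dB" and UA: "mat_adjoint U \<in> carrier_mat dB dB" using U by (auto simp: unit'_def)
  have Wc: "W \<in> carrier_mat N N" unfolding W_def N_def by (rule K_carrier[OF Uc])
  have WA: "mat_adjoint W = kron (1\<^sub>m dA) (mat_adjoint U)" unfolding W_def by (rule K_adj[OF Uc])
  have Rc: "R \<in> carrier_mat N N" using p by (simp add: psd_def N_def)
  define R' where "R' = kron (1\<^sub>m dA) (mat_adjoint U) * R * kron (1\<^sub>m dA) U"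
  have R'p: "psd N R'" unfolding R'_def WA[symmetric] W_def[symmetric] using psd_conj[OF p[folded N_def] Wc] .
  have R'c: "R' \<in> carrier_mat N N" using R'p by (simp add: psd_def)
  have hR': "mat_adjoint R' = R'" using R'p by (simp add: psd_def hermitian_def)
  have KR: "kron (1\<^sub>m dA) (mat_adjoint U) * R \<in> carrier_mat (dA*dB) (dA*dB)"
    using K_carrier[OF UA, of dA] Rc by (simp add: N_def mult_carrier_mat[of _ "dA*dB" "dA*dB" _ "dA*dB"])
  have ptr: "ptrace_A dA dB R' = mat_adjoint U * ptrace_A dA dB R * U"
    unfolding R'_def ptrace_right[OF KR Uc] ptrace_left[OF Rc[unfolded N_def] UA] ..
  define a where "a = k div dB"
  define b where "b = k mod dB"
  have dB0: "dB > 0" using k by (cases dB) auto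
  have a: "a < dA" and b: "b < dB" using k div_lt mod_lt by (auto simp: a_def b_def)
  have kab: "k = a * dB + b" by (simp add: a_def b_def)
  have "ptrace_A dA dB R' $$ (b,b) = 0" using z ptr by (simp add: b_def)
  hence "(\<Sum>a'<dA. R' $$ (a'*dB + b, a'*dB + b)) = 0" using ptrace_idx[OF b b, of dA R'] by simp
  hence "(\<Sum>a'<dA. Re (R' $$ (a'*dB + b, a'*dB + b))) = 0" by (metis Re_sum zero_complex.sel(1))
  moreover have "\<forall>a'\<in>{..<dA}. 0 \<le> Re (R' $$ (a'*dB + b, a'*dB + b))"
    using psd_diag_real(2)[OF R'p] b by (auto simp: N_def)
  ultimately have "\<forall>a'\<in>{..<dA}. Re (R' $$ (a'*dB + b, a'*dB + b)) = 0"
    using sum_nonneg_eq_0_iff[of "{..<dA}" "\<lambda>a'. Re (R' $$ (a'*dB + b, a'*dB + b))"] by simp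
  hence "Re (R' $$ (k,k)) = 0" using a kab by auto
  hence Rkk: "R' $$ (k,k) = 0" using psd_diag_real(1)[OF R'p, of k] k by (simp add: N_def)
  have j': "j < N" and k': "k < N" using j k by (simp_all add: N_def)
  show "R' $$ (k,j) = 0" unfolding R'_def[symmetric] by (rule psd_zero_row[OF R'p k' Rkk j'])
  thus "R' $$ (j,k) = 0" using herm_idx[OF R'c hR' j' k'] by simp
qed



lemma mtrace_conj': "unit' n W \<Longrightarrow> Y \<in> carrier_mat n n \<Longrightarrow> mtrace (mat_adjoint W * Y * W) = mtrace Y"
proof -
  assume W: "unit' n W" and Y: "Y \<in> carrier_mat n n"
  have Wc: "W \<in> carrier_mat n n" and WA: "mat_adjoint W \<in> carrier_mat n n" using W by (auto simp: unit'_def)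
  have "mtrace (mat_adjoint W * Y * W) = mtrace (mat_adjoint W * (Y * W))" using assoc_mult_mat[OF WA Y Wc] by simp
  also have "\<dots> = mtrace ((Y * W) * mat_adjoint W)"
    by (rule mtrace_comm[OF WA]) (use Y Wc in \<open>simp add: mult_carrier_mat[of _ n n _ n]\<close>)
  also have "(Y * W) * mat_adjoint W = Y" using assoc_mult_mat[OF Y Wc WA] W Y by (simp add: unit'_def)
  finally show ?thesis .
qed

lemma mtrace_conj: "unit' n W \<Longrightarrow> Y \<in> carrier_mat n n \<Longrightarrow> mtrace (W * Y * mat_adjoint W) = mtrace Y"
  using mtrace_conj'[OF unit'_adj] by (metis adj_adj)

theorem lemma4:
  fixes dA dB :: nat and R T :: "complex mat"
  assumes "psd (dA * dB) R"
    and "0 < Re (mtrace R)" and "Re (mtrace R) \<le> 1"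
    and "psd dB T"
    and "0 < Re (mtrace T)" and "Re (mtrace T) \<le> 1"
    and "supp dB (ptrace_A dA dB R) \<subseteq> supp dB T"
  shows "d_u dA dB R \<le>
     (1/2) * sqrt (Re (of_nat dA * Gamma_C dA dB R T
        - mtrace (ptrace_A dA dB R * pinv_sqrt dB T * ptrace_A dA dB R * pinv_sqrt dB T)))"
proof -
  define N where "N = dA * dB"
  note as = assoc_mult_mat[of _ N N _ N _ N] and mc = mult_carrier_mat[of _ N N _ N]
  note asB = assoc_mult_mat[of _ dB dB _ dB _ dB] and mcB = mult_carrier_mat[of _ dB dB _ dB]
  have Rp: "psd N R" using assms(1) by (simp add: N_def)
  have Rc: "R \<in> carrier_mat N N" and hR: "mat_adjoint R = R" using Rp by (auto simp: psd_def hermitian_def)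
  have N0: "N > 0"
  proof (rule ccontr)
    assume "\<not> N > 0"
    hence "dim_row R = 0" using Rc by simp
    hence "mtrace R = 0" by (simp add: mtrace_def)
    thus False using assms(2) by simp
  qed
  hence dA0: "dA > 0" and dB0: "dB > 0" by (auto simp: N_def)
  define \<rho> where "\<rho> = ptrace_A dA dB R"
  have \<rho>p: "psd dB \<rho>" unfolding \<rho>_def by (rule ptrace_psd[OF assms(1)])
  have \<rho>c: "\<rho> \<in> carrier_mat dB dB" and h\<rho>: "mat_adjoint \<rho> = \<rho>" using \<rho>p by (auto simp: psd_def hermitian_def)
  have Tp: "psd dB T" by (rule assms(4))
  have Tc: "T \<in> carrier_mat dB dB" and hT: "mat_adjoint T = T" using Tp by (auto simp: psd_def hermitian_def)
  obtain U t where U: "unit' dB U" and Teq: "T = U * dg dB t * mat_adjoint U"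
    using spectral[OF Tc hT] by blast
  have Uc: "U \<in> carrier_mat dB dB" and UA: "mat_adjoint U \<in> carrier_mat dB dB" using U by (auto simp: unit'_def)
  have tnn: "t b \<ge> 0" if b: "b < dB" for b
  proof -
    have "mat_adjoint U * T * U = dg dB t"
      unfolding Teq using Uc UA by (simp add: asB mcB uu_cancel1[OF U, where k=dB] unit'_eqs[OF U] right_mult_one_mat[of _ dB dB])
    hence "psd dB (dg dB t)" using psd_conj[OF Tp Uc] by simp
    from psd_diag_real(2)[OF this b] show ?thesis using b by (simp add: mat_diag_def)
  qed
  define tt where "tt = (\<lambda>k. t (k mod dB))"
  have ttnn: "\<And>k. tt k \<ge> 0" unfolding tt_def using tnn dB0 by simp
  define P where "P = pinv_sqrt dB T"
  have isq_eq: "(\<lambda>x::real. if x > 0 then 1 / sqrt x else 0) = isq" by (rule ext) (simp add: isq_def)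
  have Peq: "P = U * dg dB (isq \<circ> t) * mat_adjoint U"
    unfolding P_def pinv_sqrt_def isq_eq by (rule mat_fun_eq[OF U Teq])
  have Pc: "P \<in> carrier_mat dB dB" unfolding Peq using Uc UA by (simp add: mcB)
  define W where "W = kron (1\<^sub>m dA) U"
  have uW: "unit' N W" unfolding W_def N_def by (rule K_unit[OF U])
  have Wc: "W \<in> carrier_mat N N" and WA: "mat_adjoint W \<in> carrier_mat N N" using uW by (auto simp: unit'_def)
  have WAeq: "mat_adjoint W = kron (1\<^sub>m dA) (mat_adjoint U)" unfolding W_def by (rule K_adj[OF Uc])
  define D where "D = dg N (\<lambda>k. isq (tt k))"
  have Dc: "D \<in> carrier_mat N N" by (simp add: D_def)
  have dgc: "dg dB (isq \<circ> t) \<in> carrier_mat dB dB" by simp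
  have Keq: "kron (1\<^sub>m dA) P = W * D * mat_adjoint W"
  proof -
    have "kron (1\<^sub>m dA) P = kron (1\<^sub>m dA) (U * dg dB (isq \<circ> t)) * kron (1\<^sub>m dA) (mat_adjoint U)"
      unfolding Peq by (rule K_mult[OF mult_carrier_mat[OF Uc dgc] UA, symmetric])
    also have "kron (1\<^sub>m dA) (U * dg dB (isq \<circ> t)) = W * kron (1\<^sub>m dA) (dg dB (isq \<circ> t))"
      unfolding W_def by (rule K_mult[OF Uc dgc, symmetric])
    also have "kron (1\<^sub>m dA) (dg dB (isq \<circ> t)) = D" unfolding D_def N_def tt_def by (simp add: K_diag)
    finally show ?thesis using WAeq by simp
  qed
  define c :: complex where "c = 1 / of_nat dA"
  define E where "E = kron ((1 / of_nat dA) \<cdot>\<^sub>m 1\<^sub>m dA) \<rho>"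
  have Eeq: "E = c \<cdot>\<^sub>m kron (1\<^sub>m dA) \<rho>" unfolding E_def c_def by (rule K_smult)
  have Lc: "kron (1\<^sub>m dA) \<rho> \<in> carrier_mat N N" unfolding N_def by (rule K_carrier[OF \<rho>c])
  have Ec: "E \<in> carrier_mat N N" unfolding Eeq using Lc by simp
  have hE: "mat_adjoint E = E" unfolding Eeq adj_smult K_adj[OF \<rho>c] h\<rho> by (simp add: c_def)
  define X where "X = R - E"
  have Xc: "X \<in> carrier_mat N N" unfolding X_def by (rule minus_carrier_mat[OF Ec])
  have hX: "mat_adjoint X = X" unfolding X_def by (simp add: adj_minus[OF Rc Ec] hR hE)
  obtain V lam where V: "unit' N V" and Xeq: "X = V * dg N lam * mat_adjoint V"
    using spectral[OF Xc hX] by blast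
  have Vc: "V \<in> carrier_mat N N" and VA: "mat_adjoint V \<in> carrier_mat N N" using V by (auto simp: unit'_def)
  have tn: "trace_norm N X = (\<Sum>i<N. \<bar>lam i\<bar>)" by (rule trace_norm_herm[OF V Xeq])
  define s :: "nat \<Rightarrow> real" where "s = (\<lambda>i. if lam i \<ge> 0 then 1 else -1)"
  define S where "S = V * dg N s * mat_adjoint V"
  have Sc: "S \<in> carrier_mat N N" unfolding S_def using Vc VA by (simp add: mc)
  have hS: "mat_adjoint S = S" unfolding S_def using Vc VA by (simp add: adj_mult[of _ N N _ N] mc as)
  have ss: "mat_diag N (\<lambda>i. complex_of_real (s i) * complex_of_real (s i)) = 1\<^sub>m N"
    by (rule eq_matI) (auto simp: mat_diag_def s_def)
  have SS: "mat_adjoint S * S = 1\<^sub>m N"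
  proof -
    have "mat_adjoint S * S = V * (dg N s * dg N s) * mat_adjoint V"
      unfolding hS unfolding S_def using Vc VA
      by (simp add: as mc uu_cancel1[OF V, where k=N] dd_assoc[of _ N N])
    also have "\<dots> = 1\<^sub>m N" using ss Vc VA unit'_eqs(2)[OF V] by simp
    finally show ?thesis .
  qed
  have trXS: "Re (mtrace (X * S)) = trace_norm N X"
  proof -
    have "X * S = V * (dg N lam * dg N s) * mat_adjoint V"
      unfolding Xeq S_def using Vc VA
      by (simp add: as mc uu_cancel1[OF V, where k=N] dd_assoc[of _ N N])
    also have "dg N lam * dg N s = mat_diag N (\<lambda>i. complex_of_real (lam i * s i))" by simp
    finally have "mtrace (X * S) = (\<Sum>i<N. complex_of_real (lam i * s i))" by (simp add: mtrace_udu[OF V])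
    moreover have "lam i * s i = \<bar>lam i\<bar>" for i by (simp add: s_def)
    ultimately show ?thesis using tn by simp
  qed
  define X' where "X' = mat_adjoint W * X * W"
  define S' where "S' = mat_adjoint W * S * W"
  have X'c: "X' \<in> carrier_mat N N" unfolding X'_def using WA Xc Wc by (simp add: mc)
  have S'c: "S' \<in> carrier_mat N N" unfolding S'_def using WA Sc Wc by (simp add: mc)
  have hX': "mat_adjoint X' = X'" unfolding X'_def using WA Xc Wc hX by (simp add: adj_mult[of _ N N _ N] mc as)
  have hS': "mat_adjoint S' = S'" unfolding S'_def using WA Sc Wc hS by (simp add: adj_mult[of _ N N _ N] mc as)
  have S'S': "mat_adjoint S' * S' = 1\<^sub>m N"
  proof -
    have "mat_adjoint S' * S' = mat_adjoint W * (S * (W * mat_adjoint W) * S) * W"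
      unfolding hS' unfolding S'_def using WA Sc Wc by (simp add: as mc)
    also have "\<dots> = mat_adjoint W * (mat_adjoint S * S) * W" using unit'_eqs(2)[OF uW] Sc hS by simp
    also have "\<dots> = 1\<^sub>m N" using SS unit'_eqs(1)[OF uW] WA right_mult_one_mat[OF WA] by simp
    finally show ?thesis .
  qed
  have trX'S': "mtrace (X' * S') = mtrace (X * S)"
  proof -
    have "X' * S' = mat_adjoint W * (X * (W * mat_adjoint W) * S) * W"
      unfolding X'_def S'_def using WA Xc Sc Wc by (simp add: as mc)
    also have "\<dots> = mat_adjoint W * (X * S) * W" using unit'_eqs(2)[OF uW] Xc Sc by simp
    finally show ?thesis using mtrace_conj'[OF uW] Xc Sc by (simp add: mc)
  qed
  have XWX': "W * X' * mat_adjoint W = X"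
    unfolding X'_def using WA Xc Wc by (simp add: as mc uu_cancel2[OF uW, where k=N] unit'_eqs[OF uW] right_mult_one_mat[of _ N N])
  have trK: "mtrace (X * kron (1\<^sub>m dA) P * (X * kron (1\<^sub>m dA) P)) = mtrace (X' * D * X' * D)"
  proof -
    have "X * kron (1\<^sub>m dA) P * (X * kron (1\<^sub>m dA) P) = W * (X' * D * X' * D) * mat_adjoint W"
      unfolding Keq XWX'[symmetric] using WA X'c Wc Dc
      by (simp add: as mc uu_cancel1[OF uW, where k=N])
    thus ?thesis using mtrace_conj[OF uW] X'c Dc by (simp add: mc)
  qed
  define Q where "Q = mat_adjoint U * \<rho> * U"
  have Qc: "Q \<in> carrier_mat dB dB" unfolding Q_def using UA \<rho>c Uc by (simp add: mcB)
  have sp: "supp dB \<rho> \<subseteq> supp dB T" using assms(7) by (simp add: \<rho>_def)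
  have Qz: "\<And>b e. b < dB \<Longrightarrow> e < dB \<Longrightarrow> t b = 0 \<Longrightarrow> Q $$ (b,e) = 0 \<and> Q $$ (e,b) = 0"
    unfolding Q_def using support_Q[OF U Teq \<rho>c h\<rho> sp] by blast
  define R' where "R' = kron (1\<^sub>m dA) (mat_adjoint U) * R * kron (1\<^sub>m dA) U"
  have E'eq: "mat_adjoint W * E * W = c \<cdot>\<^sub>m kron (1\<^sub>m dA) Q"
  proof -
    have KUA: "kron (1\<^sub>m dA) (mat_adjoint U) \<in> carrier_mat N N" unfolding N_def by (rule K_carrier[OF UA])
    have "mat_adjoint W * E * W = c \<cdot>\<^sub>m (kron (1\<^sub>m dA) (mat_adjoint U) * kron (1\<^sub>m dA) \<rho> * kron (1\<^sub>m dA) U)"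
      unfolding Eeq WAeq unfolding W_def
      using KUA Lc K_carrier[OF Uc, of dA]
      by (simp add: mult_smult_distrib[of _ N N] mult_smult_assoc_mat[of _ N N] mc N_def)
    also have "kron (1\<^sub>m dA) (mat_adjoint U) * kron (1\<^sub>m dA) \<rho> * kron (1\<^sub>m dA) U = kron (1\<^sub>m dA) Q"
      unfolding Q_def K_mult[OF UA \<rho>c] K_mult[OF mult_carrier_mat[OF UA \<rho>c] Uc] ..
    finally show ?thesis .
  qed
  have R'W: "R' = mat_adjoint W * R * W" unfolding R'_def WAeq unfolding W_def ..
  have X'eq: "X' = R' - mat_adjoint W * E * W"
  proof -
    have "X' = (mat_adjoint W * R - mat_adjoint W * E) * W"
      unfolding X'_def X_def by (simp add: mult_minus_distrib_mat[OF WA Rc Ec])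
    also have "\<dots> = mat_adjoint W * R * W - mat_adjoint W * E * W"
      by (rule minus_mult_distrib_mat[OF mult_carrier_mat[OF WA Rc] mult_carrier_mat[OF WA Ec] Wc])
    finally show ?thesis unfolding R'W .
  qed
  have zero: "X' $$ (i,j) = 0" if i: "i < N" and j: "j < N" and tz: "tt i = 0 \<or> tt j = 0" for i j
  proof -
    have im: "i mod dB < dB" and jm: "j mod dB < dB" using dB0 by auto
    have R'z: "R' $$ (i,j) = 0"
    proof (cases "tt i = 0")
      case True
      have "Q $$ (i mod dB, i mod dB) = 0" using Qz[OF im im] True by (simp add: tt_def)
      thus ?thesis unfolding R'_def
        using Rprime_zero(1)[OF assms(1) U i[unfolded N_def] _ j[unfolded N_def]] by (simp add: Q_def \<rho>_def)
    next
      case False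
      hence "tt j = 0" using tz by simp
      hence "Q $$ (j mod dB, j mod dB) = 0" using Qz[OF jm jm] by (simp add: tt_def)
      thus ?thesis unfolding R'_def
        using Rprime_zero(2)[OF assms(1) U j[unfolded N_def] _ i[unfolded N_def]] by (simp add: Q_def \<rho>_def)
    qed
    have Qij: "Q $$ (i mod dB, j mod dB) = 0"
      using tz Qz[OF im jm] Qz[OF jm im] by (auto simp: tt_def)
    have E'z: "(mat_adjoint W * E * W) $$ (i,j) = 0"
      unfolding E'eq using i j Qij K_idx[OF Qc, of i dA j] K_carrier[OF Qc, of dA] by (simp add: N_def)
    have R'c: "R' \<in> carrier_mat N N" unfolding R'_def N_def
      using K_carrier[OF UA, of dA] K_carrier[OF Uc, of dA] Rc
      by (simp add: mult_carrier_mat[of _ "dA*dB" "dA*dB" _ "dA*dB"] N_def)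
    have E'c: "mat_adjoint W * E * W \<in> carrier_mat N N" using WA Ec Wc by (simp add: mc)
    show ?thesis unfolding X'eq using i j carrier_matD[OF R'c] carrier_matD[OF E'c] R'z E'z by simp
  qed
  have mi: "Re (mtrace (X' * S')) \<le> sqrt (Re (mtrace (X' * D * X' * D))) * sqrt (\<Sum>i<N. tt i)"
    unfolding D_def by (rule main_ineq[OF X'c hX' S'c hS' S'S' ttnn zero])
  have sumt: "(\<Sum>i<N. tt i) = of_nat dA * (\<Sum>b<dB. t b)"
    unfolding N_def tt_def using sum_split'[where dA=dA and dB=dB and g="\<lambda>a b. t b"] by simp
  have trT: "(\<Sum>b<dB. t b) = Re (mtrace T)"
  proof -
    have "mtrace T = (\<Sum>b<dB. complex_of_real (t b))" unfolding Teq by (rule mtrace_udu[OF U])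
    thus ?thesis by simp
  qed
  have sumt1: "(\<Sum>i<N. tt i) \<le> of_nat dA" unfolding sumt trT using assms(6) dA0 by simp
  have Zr0: "Re (mtrace (X' * D * X' * D)) \<ge> 0"
    unfolding D_def trace_XDXD[OF X'c hX'] by (intro sum_nonneg mult_nonneg_nonneg) (auto simp: isq_nonneg)
  define t0 where "t0 = mtrace (\<rho> * P * \<rho> * P)"
  have gam: "mtrace (X * kron (1\<^sub>m dA) P * (X * kron (1\<^sub>m dA) P)) = Gamma_C dA dB R T - t0 / of_nat dA"
    unfolding X_def E_def \<rho>_def t0_def Gamma_C_def Let_def P_def
    using gamma_id[OF Rc[unfolded N_def] Pc[unfolded P_def] dA0] by simp
  define Z where "Z = Re (mtrace (X' * D * X' * D))"
  have Zeq: "of_nat dA * Z = Re (of_nat dA * Gamma_C dA dB R T - t0)"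
  proof -
    have "Z = Re (Gamma_C dA dB R T - t0 / of_nat dA)" unfolding Z_def trK[symmetric] gam ..
    hence "Z = Re (Gamma_C dA dB R T) - Re t0 / of_nat dA" by simp
    thus ?thesis using dA0 by (simp add: field_simps)
  qed
  have tnb: "trace_norm N X \<le> sqrt (of_nat dA * Z)"
  proof -
    have "trace_norm N X \<le> sqrt Z * sqrt (\<Sum>i<N. tt i)" using mi trX'S' trXS by (simp add: Z_def)
    also have "\<dots> \<le> sqrt Z * sqrt (of_nat dA)"
      by (rule mult_left_mono[OF real_sqrt_le_mono[OF sumt1]]) (use Zr0 in \<open>simp add: Z_def\<close>)
    also have "\<dots> = sqrt (of_nat dA * Z)" by (simp add: real_sqrt_mult mult.commute)
    finally show ?thesis .
  qed
  define Set where "Set = {trace_norm (dA*dB) (R - kron ((1 / of_nat dA) \<cdot>\<^sub>m 1\<^sub>m dA) S) / 2 | S.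
                       psd dB S \<and> mtrace S = mtrace (ptrace_A dA dB R)}"
  have mem: "trace_norm N X / 2 \<in> Set" unfolding Set_def X_def E_def N_def
    using \<rho>p by (auto simp: \<rho>_def)
  have bdd: "bdd_below Set"
  proof (rule bdd_belowI[of _ 0])
    fix x assume "x \<in> Set"
    then obtain S where S: "psd dB S" and x: "x = trace_norm (dA*dB) (R - kron ((1 / of_nat dA) \<cdot>\<^sub>m 1\<^sub>m dA) S) / 2"
      unfolding Set_def by blast
    have Sc': "S \<in> carrier_mat dB dB" using S by (simp add: psd_def)
    have "kron ((1 / of_nat dA) \<cdot>\<^sub>m 1\<^sub>m dA) S \<in> carrier_mat (dA*dB) (dA*dB)"
      unfolding K_smult using K_carrier[OF Sc', of dA] by simp
    hence "R - kron ((1 / of_nat dA) \<cdot>\<^sub>m 1\<^sub>m dA) S \<in> carrier_mat (dA*dB) (dA*dB)" by (rule minus_carrier_mat)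
    from trace_norm_nonneg[OF this] show "0 \<le> x" using x by simp
  qed
  have "d_u dA dB R \<le> trace_norm N X / 2"
    unfolding d_u_def Set_def[symmetric] by (rule cInf_lower[OF mem bdd])
  also have "\<dots> \<le> (1/2) * sqrt (of_nat dA * Z)" using tnb by simp
  also have "\<dots> = (1/2) * sqrt (Re (of_nat dA * Gamma_C dA dB R T - t0))" by (simp add: Zeq)
  finally show ?thesis by (simp add: t0_def \<rho>_def P_def)
qed


end
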